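(* Let $f\in\mathcal C$ be real-valued and define $\mathcal L_{f,t}(\Phi)=\mathcal L(e^{itf}\Phi)$ for $t\in\mathbb R$. There exists a constant $C_9>0$ such that $\|\mathcal L_{f,t}^n\|_{\mathcal C\to\mathcal C}\le C_9$ for all $n\in\mathbb N$ and all $t$ sufficiently close to $0$.
   Context: Let $I=[0,1)$ carry a metric $d_I$, fix $\theta\in(0,1)$, and let $\Omega=I^{\mathbb Z}$ with metric $d(x,y)=\sup_{k\in\mathbb Z}\theta^{|k|}d_I(x_k,y_k)$. Let $\tau:I\to I$ have full branches, so that $b=\#\tau^{-1}(t)$ is constant; let $p_\tau$ be a fixed point of $\tau$. Assume there is $\eta\in(0,1)$ such that every inverse branch $\zeta$ of $\tau$ satisfies $d_I(\zeta(s),\zeta(t))\le\eta\,d_I(s,t)$. Let $(\bar\tau x)_i=\tau(x_i)$. Let $\pi_k:\Omega\to\Omega$ keep the coordinates $|i|\le k$ and set the others to $p_\tau$; $\Phi_k=\Phi\circ\pi_k$. Fix $\beta\in(0,1]$; $|\Phi|_\infty=\sup|\Phi|$, $|\Phi|_\beta=\sup_{k\in\mathbb N}\sup_{x\neq y}|\Phi_k(x)-\Phi_k(y)|/d(x,y)^\beta$, $\|\Phi\|=|\Phi|_\infty+|\Phi|_\beta$, $\mathcal C=\{\Phi\in C(\Omega):\|\Phi\|<\infty\}$. An inverse branch of order $k$ is a choice $\zeta=(\zeta_j)_{|j|\le k}$ of inverse branches of $\tau$, with $(\zeta_x)_j=\zeta_j(x_j)$ for $|j|\le k$, $(\zeta_x)_j=x_j$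 otherwise; $b_k=b^{2k+1}$. For a fixed real potential $f_0\in\mathcal C$, $P_k\Phi(x)=b_k^{-1}\sum_{|\zeta|=k}e^{f_0(\pi_k\zeta_x)}\Phi(\pi_k\zeta_x)$ and $P\Phi=\lim_kP_k\Phi$ pointwise. Fix a Borel probability measure $\nu_0$ with $P^*\nu_0=\lambda\nu_0$, $\lambda=\int P\mathbf 1\,d\nu_0$, and let $h\in\mathcal C$ be the unique strictly positive function with $Ph=\lambda h$, $\nu_0(h)=1$, $h(x)\le \exp\!\big(|f_0|_\beta\frac{\eta^\beta}{1-\eta^\beta}d(x,y)^\beta\big)h(y)$ for all $x,y$. Define $L\Phi=P(h\Phi)/(\lambda h)$. Let $\sigma$ be the shift $(\sigma x)_i=x_{i+1}$. Let $E:\Omega\to\Omega$ be invertible and suppose there is $C_E\in(0,\eta^{-1})$ with $d(\sigma^nE^{-1}x,\sigma^nE^{-1}y)\le C_E\,d(\sigma^nx,\sigma^ny)$ for all $n\in\mathbb Z$ and $x,y\in\Omega$. The coupled map is $T=E\circ\bar\tau$ and $\mathcal L\Phi(x)=L(\Phi)(E^{-1}x)$. (In the paper the observable $f$ here and the potential defining $P$ are both denoted $f$; the observable may be any element of $\mathcal C$.) *)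

theory Defs
  imports "HOL-Analysis.Analysis" "HOL-Probability.Probability"
begin

definition Iset :: "real set" where
  "Iset = {0..<1}"

definition Omega :: "(int \<Rightarrow> real) set" where
  "Omega = {x. \<forall>i. x i \<in> Iset}"

definition metric_on_I :: "(real \<Rightarrow> real \<Rightarrow> real) \<Rightarrow> bool" where
  "metric_on_I dI \<longleftrightarrow>
     (\<forall>s\<in>Iset. \<forall>t\<in>Iset. 0 \<le> dI s t \<and> (dI s t = 0 \<longleftrightarrow> s = t) \<and> dI s t = dI t s
        \<and> (\<forall>u\<in>Iset. dI s u \<le> dI s t + dI t u))"

definition dOm :: "real \<Rightarrow> (real \<Rightarrow> real \<Rightarrow> real) \<Rightarrow> (int \<Rightarrow> real) \<Rightarrow> (int \<Rightarrow> real) \<Rightarrow> real" where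
  "dOm \<theta> dI x y = (SUP k::int. \<theta> ^ nat \<bar>k\<bar> * dI (x k) (y k))"

definition Om_opens :: "real \<Rightarrow> (real \<Rightarrow> real \<Rightarrow> real) \<Rightarrow> (int \<Rightarrow> real) set set" where
  "Om_opens \<theta> dI = {U. U \<subseteq> Omega \<and>
       (\<forall>x\<in>U. \<exists>e>0. \<forall>y\<in>Omega. dOm \<theta> dI x y < e \<longrightarrow> y \<in> U)}"

definition shiftn :: "int \<Rightarrow> (int \<Rightarrow> real) \<Rightarrow> (int \<Rightarrow> real)" where
  "shiftn n x = (\<lambda>i. x (i + n))"

definition piK :: "real \<Rightarrow> nat \<Rightarrow> (int \<Rightarrow> real) \<Rightarrow> (int \<Rightarrow> real)" where
  "piK p k x = (\<lambda>i. if \<bar>i\<bar> \<le> int k then x i else p)"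

definition cont_Om :: "real \<Rightarrow> (real \<Rightarrow> real \<Rightarrow> real) \<Rightarrow> ((int \<Rightarrow> real) \<Rightarrow> 'a::real_normed_vector) \<Rightarrow> bool" where
  "cont_Om \<theta> dI \<Phi> \<longleftrightarrow> (\<forall>x\<in>Omega. \<forall>e>0. \<exists>\<delta>>0. \<forall>y\<in>Omega.
       dOm \<theta> dI x y < \<delta> \<longrightarrow> norm (\<Phi> y - \<Phi> x) < e)"

definition sup_norm :: "((int \<Rightarrow> real) \<Rightarrow> 'a::real_normed_vector) \<Rightarrow> real" where
  "sup_norm \<Phi> = (SUP x\<in>Omega. norm (\<Phi> x))"

definition hol_quot :: "real \<Rightarrow> (real \<Rightarrow> real \<Rightarrow> real) \<Rightarrow> real \<Rightarrow> real \<Rightarrow>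
    ((int \<Rightarrow> real) \<Rightarrow> 'a::real_normed_vector) \<Rightarrow> real set" where
  "hol_quot \<theta> dI p \<beta> \<Phi> = {norm (\<Phi> (piK p k x) - \<Phi> (piK p k y)) / (dOm \<theta> dI x y) powr \<beta>
       | k x y. x \<in> Omega \<and> y \<in> Omega \<and> x \<noteq> y}"

definition hol_semi :: "real \<Rightarrow> (real \<Rightarrow> real \<Rightarrow> real) \<Rightarrow> real \<Rightarrow> real \<Rightarrow>
    ((int \<Rightarrow> real) \<Rightarrow> 'a::real_normed_vector) \<Rightarrow> real" where
  "hol_semi \<theta> dI p \<beta> \<Phi> = Sup (hol_quot \<theta> dI p \<beta> \<Phi>)"

definition inC :: "real \<Rightarrow> (real \<Rightarrow> real \<Rightarrow> real) \<Rightarrow> real \<Rightarrow> real \<Rightarrow>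
    ((int \<Rightarrow> real) \<Rightarrow> 'a::real_normed_vector) \<Rightarrow> bool" where
  "inC \<theta> dI p \<beta> \<Phi> \<longleftrightarrow> cont_Om \<theta> dI \<Phi> \<and> bdd_above ((\<lambda>x. norm (\<Phi> x)) ` Omega)
      \<and> bdd_above (hol_quot \<theta> dI p \<beta> \<Phi>)"

definition Cnorm :: "real \<Rightarrow> (real \<Rightarrow> real \<Rightarrow> real) \<Rightarrow> real \<Rightarrow> real \<Rightarrow>
    ((int \<Rightarrow> real) \<Rightarrow> 'a::real_normed_vector) \<Rightarrow> real" where
  "Cnorm \<theta> dI p \<beta> \<Phi> = sup_norm \<Phi> + hol_semi \<theta> dI p \<beta> \<Phi>"

text \<open>The inverse branches of tau are zeta j, j < b. An inverse branch of order k is a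
  choice c : {-k..k} -> {..<b}.\<close>
definition branch_choices :: "nat \<Rightarrow> nat \<Rightarrow> (int \<Rightarrow> nat) set" where
  "branch_choices b k = PiE {- int k .. int k} (\<lambda>_. {..<b})"

definition zeta_x :: "(nat \<Rightarrow> real \<Rightarrow> real) \<Rightarrow> nat \<Rightarrow> (int \<Rightarrow> nat) \<Rightarrow> (int \<Rightarrow> real) \<Rightarrow> (int \<Rightarrow> real)" where
  "zeta_x \<zeta> k c x = (\<lambda>i. if \<bar>i\<bar> \<le> int k then \<zeta> (c i) (x i) else x i)"

definition Pk :: "nat \<Rightarrow> (nat \<Rightarrow> real \<Rightarrow> real) \<Rightarrow> ((int \<Rightarrow> real) \<Rightarrow> real) \<Rightarrow> real \<Rightarrow> nat \<Rightarrow>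
    ((int \<Rightarrow> real) \<Rightarrow> 'a::real_normed_vector) \<Rightarrow> (int \<Rightarrow> real) \<Rightarrow> 'a" where
  "Pk b \<zeta> f0 p k \<Phi> x = (1 / real b ^ (2 * k + 1)) *\<^sub>R
     (\<Sum>c\<in>branch_choices b k. exp (f0 (piK p k (zeta_x \<zeta> k c x))) *\<^sub>R \<Phi> (piK p k (zeta_x \<zeta> k c x)))"

definition Pop :: "nat \<Rightarrow> (nat \<Rightarrow> real \<Rightarrow> real) \<Rightarrow> ((int \<Rightarrow> real) \<Rightarrow> real) \<Rightarrow> real \<Rightarrow>
    ((int \<Rightarrow> real) \<Rightarrow> 'a::real_normed_vector) \<Rightarrow> (int \<Rightarrow> real) \<Rightarrow> 'a" where
  "Pop b \<zeta> f0 p \<Phi> x = lim (\<lambda>k. Pk b \<zeta> f0 p k \<Phi> x)"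

definition Lop :: "nat \<Rightarrow> (nat \<Rightarrow> real \<Rightarrow> real) \<Rightarrow> ((int \<Rightarrow> real) \<Rightarrow> real) \<Rightarrow> real \<Rightarrow>
    ((int \<Rightarrow> real) \<Rightarrow> real) \<Rightarrow> real \<Rightarrow>
    ((int \<Rightarrow> real) \<Rightarrow> 'a::real_normed_vector) \<Rightarrow> (int \<Rightarrow> real) \<Rightarrow> 'a" where
  "Lop b \<zeta> f0 p h lam \<Phi> x = (1 / (lam * h x)) *\<^sub>R Pop b \<zeta> f0 p (\<lambda>y. h y *\<^sub>R \<Phi> y) x"

definition calL :: "nat \<Rightarrow> (nat \<Rightarrow> real \<Rightarrow> real) \<Rightarrow> ((int \<Rightarrow> real) \<Rightarrow> real) \<Rightarrow> real \<Rightarrow>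
    ((int \<Rightarrow> real) \<Rightarrow> real) \<Rightarrow> real \<Rightarrow> ((int \<Rightarrow> real) \<Rightarrow> (int \<Rightarrow> real)) \<Rightarrow>
    ((int \<Rightarrow> real) \<Rightarrow> 'a::real_normed_vector) \<Rightarrow> (int \<Rightarrow> real) \<Rightarrow> 'a" where
  "calL b \<zeta> f0 p h lam Einv \<Phi> x = Lop b \<zeta> f0 p h lam \<Phi> (Einv x)"

definition Lft :: "nat \<Rightarrow> (nat \<Rightarrow> real \<Rightarrow> real) \<Rightarrow> ((int \<Rightarrow> real) \<Rightarrow> real) \<Rightarrow> real \<Rightarrow>
    ((int \<Rightarrow> real) \<Rightarrow> real) \<Rightarrow> real \<Rightarrow> ((int \<Rightarrow> real) \<Rightarrow> (int \<Rightarrow> real)) \<Rightarrow>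
    ((int \<Rightarrow> real) \<Rightarrow> real) \<Rightarrow> real \<Rightarrow>
    ((int \<Rightarrow> real) \<Rightarrow> complex) \<Rightarrow> (int \<Rightarrow> real) \<Rightarrow> complex" where
  "Lft b \<zeta> f0 p h lam Einv f t \<Phi> =
     calL b \<zeta> f0 p h lam Einv (\<lambda>y. exp (\<i> * complex_of_real (t * f y)) * \<Phi> y)"

end

theory Submission
  imports Defs
begin


locale CM =
  fixes dI :: "real \<Rightarrow> real \<Rightarrow> real" and \<theta> \<eta> \<beta> p Bd :: real
    and b :: nat and \<zeta> :: "nat \<Rightarrow> real \<Rightarrow> real"
  assumes dI_metric: "metric_on_I dI"
    and Bd: "\<forall>s\<in>Iset. \<forall>t\<in>Iset. dI s t \<le> Bd"
    and theta: "0 < \<theta>" "\<theta> < 1"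
    and eta: "0 < \<eta>" "\<eta> < 1"
    and beta: "0 < \<beta>" "\<beta> \<le> 1"
    and pI: "p \<in> Iset" and bpos: "0 < b"
    and br: "\<forall>j<b. \<forall>s\<in>Iset. \<zeta> j s \<in> Iset"
    and contract: "\<forall>j<b. \<forall>s\<in>Iset. \<forall>t\<in>Iset. dI (\<zeta> j s) (\<zeta> j t) \<le> \<eta> * dI s t"
begin

abbreviation "d \<equiv> dOm \<theta> dI"

lemma dI_nn: "s \<in> Iset \<Longrightarrow> t \<in> Iset \<Longrightarrow> 0 \<le> dI s t"
  using dI_metric unfolding metric_on_I_def by blast
lemma dI_0: "s \<in> Iset \<Longrightarrow> dI s s = 0"
  using dI_metric unfolding metric_on_I_def by blast
lemma dI_eq0: "s \<in> Iset \<Longrightarrow> t \<in> Iset \<Longrightarrow> dI s t = 0 \<longleftrightarrow> s = t"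
  using dI_metric unfolding metric_on_I_def by blast
lemma dI_sym: "s \<in> Iset \<Longrightarrow> t \<in> Iset \<Longrightarrow> dI s t = dI t s"
  using dI_metric unfolding metric_on_I_def by blast

lemma Bd_nn: "0 \<le> Bd"
  using Bd dI_0[OF pI] pI by force

lemma OmD: "x \<in> Omega \<Longrightarrow> x i \<in> Iset"
  by (simp add: Omega_def)

lemma th_pow: "0 < \<theta> ^ nat \<bar>k\<bar>" "\<theta> ^ nat \<bar>k\<bar> \<le> 1"
  using theta by (auto simp: power_le_one)

lemma dterm_bnd:
  assumes "x \<in> Omega" "y \<in> Omega"
  shows "0 \<le> \<theta> ^ nat \<bar>k\<bar> * dI (x k) (y k)" "\<theta> ^ nat \<bar>k\<bar> * dI (x k) (y k) \<le> Bd"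
proof -
  have a: "0 \<le> dI (x k) (y k)" "dI (x k) (y k) \<le> Bd"
    using dI_nn Bd OmD assms by auto
  show "0 \<le> \<theta> ^ nat \<bar>k\<bar> * dI (x k) (y k)" using a th_pow(1)[of k] by (metis less_imp_le mult_nonneg_nonneg)
  have "\<theta> ^ nat \<bar>k\<bar> * dI (x k) (y k) \<le> 1 * dI (x k) (y k)"
    using a th_pow by (intro mult_right_mono) auto
  then show "\<theta> ^ nat \<bar>k\<bar> * dI (x k) (y k) \<le> Bd" using a by simp
qed

lemma d_upper:
  assumes "x \<in> Omega" "y \<in> Omega"
  shows "\<theta> ^ nat \<bar>k\<bar> * dI (x k) (y k) \<le> d x y"
  unfolding dOm_def
  by (rule cSUP_upper) (auto intro!: bdd_aboveI2 dterm_bnd assms)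

lemma d_least:
  assumes "\<And>k. \<theta> ^ nat \<bar>k\<bar> * dI (x k) (y k) \<le> r"
  shows "d x y \<le> r"
  unfolding dOm_def by (rule cSUP_least) (auto intro: assms)

lemma d_nn: "x \<in> Omega \<Longrightarrow> y \<in> Omega \<Longrightarrow> 0 \<le> d x y"
  using d_upper[of x y 0] dterm_bnd[of x y 0] by linarith

lemma d_le_Bd: "x \<in> Omega \<Longrightarrow> y \<in> Omega \<Longrightarrow> d x y \<le> Bd"
  by (rule d_least) (rule dterm_bnd)

lemma d_self: "x \<in> Omega \<Longrightarrow> d x x = 0"
  using d_nn[of x x] d_least[of x x 0] by (simp add: dI_0 OmD)

lemma d_pos: "x \<in> Omega \<Longrightarrow> y \<in> Omega \<Longrightarrow> x \<noteq> y \<Longrightarrow> 0 < d x y"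
proof -
  assume xy: "x \<in> Omega" "y \<in> Omega" "x \<noteq> y"
  then obtain k where "x k \<noteq> y k" by auto
  then have "dI (x k) (y k) \<noteq> 0" using dI_eq0 OmD xy by auto
  then have "0 < \<theta> ^ nat \<bar>k\<bar> * dI (x k) (y k)"
    using dI_nn OmD xy th_pow by (simp add: order_le_neq_trans)
  then show ?thesis using d_upper[OF xy(1,2), of k] by linarith
qed

lemma piK_Om: "x \<in> Omega \<Longrightarrow> piK p k x \<in> Omega"
  using pI by (simp add: Omega_def piK_def)

lemma piK_idem: "piK p k (piK p k x) = piK p k x"
  by (auto simp: piK_def fun_eq_iff)

lemma piK_mono: "k \<le> m \<Longrightarrow> piK p m (piK p k x) = piK p k x"
  by (auto simp: piK_def fun_eq_iff)

lemma ch_lt: "c \<in> branch_choices b k \<Longrightarrow> \<bar>i\<bar> \<le> int k \<Longrightarrow> c i < b"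
  unfolding branch_choices_def by (auto simp: PiE_iff abs_le_iff)

lemma ch_lt_mono: "c \<in> branch_choices b m \<Longrightarrow> k \<le> m \<Longrightarrow> \<bar>i\<bar> \<le> int k \<Longrightarrow> c i < b"
  using ch_lt[of c m i] by simp

lemma zx_Om_gen: "x \<in> Omega \<Longrightarrow> c \<in> branch_choices b m \<Longrightarrow> k \<le> m \<Longrightarrow> zeta_x \<zeta> k c x \<in> Omega"
  using br ch_lt_mono by (auto simp: Omega_def zeta_x_def)

lemma zx_Om: "x \<in> Omega \<Longrightarrow> c \<in> branch_choices b k \<Longrightarrow> zeta_x \<zeta> k c x \<in> Omega"
  using br ch_lt by (auto simp: Omega_def zeta_x_def)

lemma d_piK: assumes "x \<in> Omega" "y \<in> Omega" shows "d (piK p k x) (piK p k y) \<le> d x y"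
proof (rule d_least)
  fix i
  show "\<theta> ^ nat \<bar>i\<bar> * dI (piK p k x i) (piK p k y i) \<le> d x y"
    using d_upper[OF assms, of i] d_nn[OF assms] by (auto simp: piK_def dI_0 pI)
qed

lemma d_branch:
  assumes "x \<in> Omega" "y \<in> Omega" "c \<in> branch_choices b k"
  shows "d (piK p k (zeta_x \<zeta> k c x)) (piK p k (zeta_x \<zeta> k c y)) \<le> \<eta> * d x y"
proof (rule d_least)
  fix i
  show "\<theta> ^ nat \<bar>i\<bar> * dI (piK p k (zeta_x \<zeta> k c x) i) (piK p k (zeta_x \<zeta> k c y) i) \<le> \<eta> * d x y"
  proof (cases "\<bar>i\<bar> \<le> int k")
    case True
    have "dI (\<zeta> (c i) (x i)) (\<zeta> (c i) (y i)) \<le> \<eta> * dI (x i) (y i)"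
      using contract ch_lt[OF assms(3) True] OmD assms by blast
    then have "\<theta> ^ nat \<bar>i\<bar> * dI (\<zeta> (c i) (x i)) (\<zeta> (c i) (y i)) \<le> \<theta> ^ nat \<bar>i\<bar> * (\<eta> * dI (x i) (y i))"
      using th_pow(1)[of i] by (intro mult_left_mono) auto
    also have "\<dots> = \<eta> * (\<theta> ^ nat \<bar>i\<bar> * dI (x i) (y i))" by simp
    also have "\<dots> \<le> \<eta> * d x y" using d_upper[OF assms(1,2)] eta by (intro mult_left_mono) auto
    finally show ?thesis using True by (simp add: piK_def zeta_x_def)
  next
    case False
    then show ?thesis using d_nn[OF assms(1,2)] eta by (simp add: piK_def zeta_x_def dI_0 pI)
  qed
qed

lemma d_step:
  assumes "x \<in> Omega" "c \<in> branch_choices b (Suc k)"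
  shows "d (piK p (Suc k) (zeta_x \<zeta> (Suc k) c x)) (piK p k (zeta_x \<zeta> k c x)) \<le> \<theta> ^ Suc k * Bd"
proof (rule d_least)
  fix i :: int
  show "\<theta> ^ nat \<bar>i\<bar> * dI (piK p (Suc k) (zeta_x \<zeta> (Suc k) c x) i) (piK p k (zeta_x \<zeta> k c x) i) \<le> \<theta> ^ Suc k * Bd"
  proof (cases "\<bar>i\<bar> = int (Suc k)")
    case True
    then have ni: "nat \<bar>i\<bar> = Suc k" by simp
    have "\<zeta> (c i) (x i) \<in> Iset" using br ch_lt[OF assms(2)] True OmD[OF assms(1)] by simp
    then have "dI (\<zeta> (c i) (x i)) p \<le> Bd" using Bd pI by blast
    then show ?thesis using True ni theta
      by (simp add: piK_def zeta_x_def mult_left_mono)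
  next
    case False
    then have "\<theta> ^ nat \<bar>i\<bar> * dI (piK p (Suc k) (zeta_x \<zeta> (Suc k) c x) i) (piK p k (zeta_x \<zeta> k c x) i) = 0"
      by (auto simp: piK_def zeta_x_def dI_0 pI intro!: dI_0 br[rule_format] ch_lt[OF assms(2)] OmD[OF assms(1)])
    then show ?thesis using Bd_nn theta by simp
  qed
qed

end



lemma sum_PiE_insert:
  fixes Q :: "('i \<Rightarrow> 'b) \<Rightarrow> 'c::real_vector"
  assumes "x \<notin> S" "\<And>g y. Q (g(x := y)) = Q g"
  shows "sum Q (PiE (insert x S) T) = real (card (T x)) *\<^sub>R sum Q (PiE S T)"
proof -
  have "sum Q (PiE (insert x S) T) = sum (Q \<circ> (\<lambda>(y, g). g(x := y))) (T x \<times> PiE S T)"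
    unfolding PiE_insert_eq by (rule sum.reindex[OF inj_combinator[OF assms(1)]])
  also have "\<dots> = sum (\<lambda>(y,g). Q g) (T x \<times> PiE S T)"
    by (rule sum.cong) (auto simp: assms(2))
  also have "\<dots> = (\<Sum>y\<in>T x. sum Q (PiE S T))"
    by (simp add: sum.cartesian_product[symmetric])
  also have "\<dots> = real (card (T x)) *\<^sub>R sum Q (PiE S T)"
    by (simp add: sum_constant_scaleR)
  finally show ?thesis .
qed

lemma ch_finite: "finite (branch_choices b k)"
  unfolding branch_choices_def by (auto intro: finite_PiE)

lemma ch_card: "card (branch_choices b k) = b ^ (2 * k + 1)"
proof -
  have "card {- int k..int k} = 2 * k + 1" by simp
  then show ?thesis unfolding branch_choices_def by (simp add: card_PiE)
qed

lemma ch_Suc: "branch_choices b (Suc k) =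
   PiE (insert (int k + 1) (insert (- (int k + 1)) {- int k..int k})) (\<lambda>_. {..<b})"
proof -
  have "{- int (Suc k)..int (Suc k)} = insert (int k + 1) (insert (- (int k + 1)) {- int k..int k})"
    by auto
  then show ?thesis unfolding branch_choices_def by simp
qed

lemma zx_upd: "int k < \<bar>x\<bar> \<Longrightarrow> zeta_x \<zeta> k (g(x := y)) u = zeta_x \<zeta> k g u"
  by (auto simp: zeta_x_def fun_eq_iff)

lemma sum_ch_Suc:
  fixes F :: "(int \<Rightarrow> real) \<Rightarrow> 'c::real_vector"
  shows "(\<Sum>c\<in>branch_choices b (Suc k). F (zeta_x \<zeta> k c u)) =
         real (b ^ 2) *\<^sub>R (\<Sum>c\<in>branch_choices b k. F (zeta_x \<zeta> k c u))"
proof -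
  let ?Q = "\<lambda>c. F (zeta_x \<zeta> k c u)"
  let ?T = "\<lambda>_::int. {..<b}"
  have 1: "sum ?Q (PiE (insert (int k + 1) (insert (- (int k + 1)) {- int k..int k})) ?T)
     = real (card (?T (int k + 1))) *\<^sub>R sum ?Q (PiE (insert (- (int k + 1)) {- int k..int k}) ?T)"
    by (rule sum_PiE_insert) (auto simp: zx_upd)
  have 2: "sum ?Q (PiE (insert (- (int k + 1)) {- int k..int k}) ?T)
     = real (card (?T (- (int k + 1)))) *\<^sub>R sum ?Q (PiE {- int k..int k} ?T)"
    by (rule sum_PiE_insert) (auto simp: zx_upd)
  show ?thesis unfolding ch_Suc 1 2 by (simp add: branch_choices_def power2_eq_square)
qed

lemma pow_powr: "0 \<le> (x::real) \<Longrightarrow> (x ^ n) powr a = (x powr a) ^ n"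
  by (induction n) (simp_all add: powr_mult)

lemma convergent_diff_bound:
  fixes a :: "nat \<Rightarrow> 'a::banach"
  assumes "\<And>k. norm (a (Suc k) - a k) \<le> r k" "summable r"
  shows "convergent a"
proof -
  have "summable (\<lambda>k. a (Suc k) - a k)"
    by (rule summable_comparison_test'[OF assms(2)]) (rule assms(1))
  then have "(\<lambda>n. \<Sum>i<n. a (Suc i) - a i) \<longlonglongrightarrow> suminf (\<lambda>k. a (Suc k) - a k)"
    by (rule summable_LIMSEQ)
  then have "(\<lambda>n. a n - a 0) \<longlonglongrightarrow> suminf (\<lambda>k. a (Suc k) - a k)"
    by (simp add: sum_lessThan_telescope)
  then have "(\<lambda>n. (a n - a 0) + a 0) \<longlonglongrightarrow> suminf (\<lambda>k. a (Suc k) - a k) + a 0"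
    by (intro tendsto_add) auto
  then show ?thesis by (auto simp: convergent_def)
qed

definition hq :: "real \<Rightarrow> (real \<Rightarrow> real \<Rightarrow> real) \<Rightarrow> real \<Rightarrow> real \<Rightarrow>
    ((int \<Rightarrow> real) \<Rightarrow> 'a::real_normed_vector) \<Rightarrow> real \<Rightarrow> bool" where
  "hq \<theta> dI p \<beta> G C \<longleftrightarrow> (\<forall>m. \<forall>x\<in>Omega. \<forall>y\<in>Omega.
      norm (G (piK p m x) - G (piK p m y)) \<le> C * dOm \<theta> dI x y powr \<beta>)"

context CM begin

lemma Pk_conv:
  fixes G :: "(int \<Rightarrow> real) \<Rightarrow> 'a::banach"
  assumes H: "hq \<theta> dI p \<beta> (\<lambda>x. exp (f0 x) *\<^sub>R G x) C" and C: "0 \<le> C" and u: "u \<in> Omega"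
  shows "convergent (\<lambda>k. Pk b \<zeta> f0 p k G u)"
proof (rule convergent_diff_bound)
  define H where "H = (\<lambda>x. exp (f0 x) *\<^sub>R G x)"
  let ?r = "\<lambda>k. C * Bd powr \<beta> * (\<theta> powr \<beta>) ^ Suc k"
  show "summable ?r"
    using theta beta by (intro summable_mult summable_mult2 summable_geometric) (auto simp: powr01_less_one)
  fix k
  define N where "N = real b ^ (2 * Suc k + 1)"
  have Npos: "0 < N" using bpos by (simp add: N_def)
  have Pk_eq: "Pk b \<zeta> f0 p k G u = (1 / N) *\<^sub>R (\<Sum>c\<in>branch_choices b (Suc k). H (piK p k (zeta_x \<zeta> k c u)))"
  proof -
    have "(\<Sum>c\<in>branch_choices b (Suc k). H (piK p k (zeta_x \<zeta> k c u)))
        = real (b ^ 2) *\<^sub>R (\<Sum>c\<in>branch_choices b k. H (piK p k (zeta_x \<zeta> k c u)))"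
      by (rule sum_ch_Suc)
    moreover have "N = real b ^ 2 * real b ^ (2 * k + 1)" by (simp add: N_def power_add[symmetric])
    ultimately show ?thesis using bpos by (simp add: Pk_def H_def)
  qed
  have Pk1_eq: "Pk b \<zeta> f0 p (Suc k) G u = (1 / N) *\<^sub>R (\<Sum>c\<in>branch_choices b (Suc k). H (piK p (Suc k) (zeta_x \<zeta> (Suc k) c u)))"
    by (simp add: Pk_def H_def N_def)
  have "Pk b \<zeta> f0 p (Suc k) G u - Pk b \<zeta> f0 p k G u = (1 / N) *\<^sub>R
     (\<Sum>c\<in>branch_choices b (Suc k). H (piK p (Suc k) (zeta_x \<zeta> (Suc k) c u)) - H (piK p k (zeta_x \<zeta> k c u)))"
    unfolding Pk_eq Pk1_eq by (simp add: sum_subtractf scaleR_diff_right)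
  also have "norm \<dots> \<le> (1 / N) * (\<Sum>c\<in>branch_choices b (Suc k). ?r k)"
  proof -
    have "norm (\<Sum>c\<in>branch_choices b (Suc k). H (piK p (Suc k) (zeta_x \<zeta> (Suc k) c u)) - H (piK p k (zeta_x \<zeta> k c u)))
        \<le> (\<Sum>c\<in>branch_choices b (Suc k). ?r k)"
    proof (rule sum_norm_le)
      fix c assume c: "c \<in> branch_choices b (Suc k)"
      have Om1: "piK p (Suc k) (zeta_x \<zeta> (Suc k) c u) \<in> Omega"
        using zx_Om_gen[OF u c] piK_Om by simp
      have Om2: "piK p k (zeta_x \<zeta> k c u) \<in> Omega"
        using zx_Om_gen[OF u c] piK_Om by simp
      have dd: "d (piK p (Suc k) (zeta_x \<zeta> (Suc k) c u)) (piK p k (zeta_x \<zeta> k c u)) \<le> \<theta> ^ Suc k * Bd"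
        by (rule d_step[OF u c])
      have "norm (H (piK p (Suc k) (piK p (Suc k) (zeta_x \<zeta> (Suc k) c u))) - H (piK p (Suc k) (piK p k (zeta_x \<zeta> k c u))))
           \<le> C * d (piK p (Suc k) (zeta_x \<zeta> (Suc k) c u)) (piK p k (zeta_x \<zeta> k c u)) powr \<beta>"
        using H Om1 Om2 unfolding hq_def H_def by blast
      also have "\<dots> \<le> C * (\<theta> ^ Suc k * Bd) powr \<beta>"
        using dd d_nn[OF Om1 Om2] beta C by (intro mult_left_mono powr_mono2) auto
      also have "\<dots> = ?r k"
        using theta Bd_nn by (simp add: powr_mult pow_powr mult_ac)
      finally show "norm (H (piK p (Suc k) (zeta_x \<zeta> (Suc k) c u)) - H (piK p k (zeta_x \<zeta> k c u))) \<le> ?r k"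
        by (simp add: piK_idem piK_mono)
    qed
    then show ?thesis using Npos by (simp add: divide_right_mono)
  qed
  also have "\<dots> = ?r k"
    using Npos bpos by (simp add: ch_card N_def)
  finally show "norm (Pk b \<zeta> f0 p (Suc k) G u - Pk b \<zeta> f0 p k G u) \<le> ?r k" .
qed

end



lemma cis1: "cmod (cis x - 1) \<le> \<bar>x\<bar>"
proof -
  have "(cmod (cis x - 1))^2 = (cos x - 1)^2 + (sin x)^2" by (simp add: cmod_power2)
  also have "\<dots> = 2 - 2 * cos x" using sin_cos_squared_add[of x] by (simp add: power2_eq_square algebra_simps)
  also have "\<dots> = 4 * (sin (x/2))^2" using cos_double_sin[of "x/2"] by simp
  also have "\<dots> \<le> 4 * (x/2)^2"
    using abs_sin_x_le_abs_x[of "x/2"] abs_le_square_iff by (metis mult_left_mono zero_le_numeral)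
  also have "\<dots> = \<bar>x\<bar>^2" by (simp add: power2_eq_square)
  finally show ?thesis by (rule power2_le_imp_le) simp
qed

lemma cexp_lip: "cmod (exp (\<i> * complex_of_real a) - exp (\<i> * complex_of_real b)) \<le> \<bar>a - b\<bar>"
proof -
  have "exp (\<i> * complex_of_real a) - exp (\<i> * complex_of_real b) = cis b * (cis (a - b) - 1)"
    by (simp add: cis_conv_exp[symmetric] algebra_simps cis_mult)
  then show ?thesis using cis1[of "a - b"] by (simp add: norm_mult)
qed

lemma exp_lip1: "(a::real) \<le> b \<Longrightarrow> exp b - exp a \<le> exp b * (b - a)"
proof -
  assume "a \<le> b"
  have "1 + (a - b) \<le> exp (a - b)" by (rule exp_ge_add_one_self)
  then have "exp b * (1 + (a - b)) \<le> exp b * exp (a - b)" by (intro mult_left_mono) auto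
  then show ?thesis by (simp add: exp_diff algebra_simps)
qed

lemma exp_lip:
  fixes a b M :: real
  assumes "\<bar>a\<bar> \<le> M" "\<bar>b\<bar> \<le> M"
  shows "\<bar>exp a - exp b\<bar> \<le> exp M * \<bar>a - b\<bar>"
proof (cases "a \<le> b")
  case True
  have "\<bar>exp a - exp b\<bar> = exp b - exp a" using True by simp
  also have "\<dots> \<le> exp b * (b - a)" by (rule exp_lip1[OF True])
  also have "\<dots> \<le> exp M * (b - a)" using True assms by (intro mult_right_mono) auto
  finally show ?thesis using True by simp
next
  case False
  have "\<bar>exp a - exp b\<bar> = exp a - exp b" using False by simp
  also have "\<dots> \<le> exp a * (a - b)" using False by (intro exp_lip1) simp
  also have "\<dots> \<le> exp M * (a - b)" using False assms by (intro mult_right_mono) auto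
  finally show ?thesis using False by simp
qed

lemma expm1_le: "0 \<le> (x::real) \<Longrightarrow> exp x - 1 \<le> x * exp x"
  using exp_lip1[of 0 x] by (simp add: mult.commute)




context CM begin

definition z0 :: "int \<Rightarrow> real" where "z0 = (\<lambda>_. 0)"
definition z1 :: "int \<Rightarrow> real" where "z1 = (\<lambda>_. 1/2)"
lemma z_Om: "z0 \<in> Omega" "z1 \<in> Omega" "z0 \<noteq> z1"
  by (auto simp: z0_def z1_def Omega_def Iset_def fun_eq_iff)

lemma Om_ne: "Omega \<noteq> {}" using z_Om by auto

lemma hq_mono: "hq \<theta> dI p \<beta> G C \<Longrightarrow> C \<le> C' \<Longrightarrow> hq \<theta> dI p \<beta> G C'"
  unfolding hq_def
  by (meson d_nn mult_right_mono order_trans powr_ge_zero)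

lemma hq_quot_le:
  assumes "hq \<theta> dI p \<beta> G C"
  shows "\<forall>q\<in>hol_quot \<theta> dI p \<beta> G. q \<le> C"
proof
  fix q assume "q \<in> hol_quot \<theta> dI p \<beta> G"
  then obtain k x y where q: "q = norm (G (piK p k x) - G (piK p k y)) / d x y powr \<beta>"
    and xy: "x \<in> Omega" "y \<in> Omega" "x \<noteq> y" unfolding hol_quot_def by blast
  have pos: "0 < d x y powr \<beta>" using d_pos[OF xy] by simp
  have "norm (G (piK p k x) - G (piK p k y)) \<le> C * d x y powr \<beta>"
    using assms xy unfolding hq_def by blast
  then show "q \<le> C" using pos by (simp add: q divide_le_eq)
qed

lemma hol_quot_ne: "hol_quot \<theta> dI p \<beta> G \<noteq> {}"
  unfolding hol_quot_def using z_Om by blast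

lemma hol_quot_nn: "q \<in> hol_quot \<theta> dI p \<beta> G \<Longrightarrow> 0 \<le> q"
  unfolding hol_quot_def by auto

lemma inC_hq: assumes "inC \<theta> dI p \<beta> G" shows "hq \<theta> dI p \<beta> G (hol_semi \<theta> dI p \<beta> G)"
  unfolding hq_def
proof (intro allI ballI)
  fix m x y assume xy: "x \<in> Omega" "y \<in> Omega"
  show "norm (G (piK p m x) - G (piK p m y)) \<le> hol_semi \<theta> dI p \<beta> G * d x y powr \<beta>"
  proof (cases "x = y")
    case True then show ?thesis using xy by (simp add: d_self)
  next
    case False
    have pos: "0 < d x y powr \<beta>" using d_pos[OF xy False] by simp
    have "norm (G (piK p m x) - G (piK p m y)) / d x y powr \<beta> \<in> hol_quot \<theta> dI p \<beta> G"
      unfolding hol_quot_def using xy False by blast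
    then have "norm (G (piK p m x) - G (piK p m y)) / d x y powr \<beta> \<le> hol_semi \<theta> dI p \<beta> G"
      unfolding hol_semi_def using assms unfolding inC_def by (intro cSup_upper) auto
    then show ?thesis using pos by (simp add: divide_le_eq)
  qed
qed

lemma hol_semi_nn: assumes "inC \<theta> dI p \<beta> G" shows "0 \<le> hol_semi \<theta> dI p \<beta> G"
proof -
  obtain q where q: "q \<in> hol_quot \<theta> dI p \<beta> G" using hol_quot_ne by blast
  have "q \<le> hol_semi \<theta> dI p \<beta> G"
    unfolding hol_semi_def using assms q unfolding inC_def by (intro cSup_upper) auto
  then show ?thesis using hol_quot_nn[OF q] by linarith
qed

lemma inC_bound: assumes "inC \<theta> dI p \<beta> G" "x \<in> Omega" shows "norm (G x) \<le> sup_norm G"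
  unfolding sup_norm_def using assms unfolding inC_def by (intro cSUP_upper) auto

lemma hq_scaleR:
  fixes g :: "(int \<Rightarrow> real) \<Rightarrow> real" and G :: "(int \<Rightarrow> real) \<Rightarrow> 'a::real_normed_vector"
  assumes "hq \<theta> dI p \<beta> g S1" "\<forall>x\<in>Omega. \<bar>g x\<bar> \<le> M1"
    "hq \<theta> dI p \<beta> G S2" "\<forall>x\<in>Omega. norm (G x) \<le> M2"
  shows "hq \<theta> dI p \<beta> (\<lambda>x. g x *\<^sub>R G x) (M1 * S2 + M2 * S1)"
  unfolding hq_def
proof (intro allI ballI)
  fix m x y assume xy: "x \<in> Omega" "y \<in> Omega"
  let ?a = "piK p m x" and ?b = "piK p m y" and ?D = "d x y powr \<beta>"
  have ab: "?a \<in> Omega" "?b \<in> Omega" using xy piK_Om by auto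
  have M1: "0 \<le> M1" using assms(2) ab by force
  have "g ?a *\<^sub>R G ?a - g ?b *\<^sub>R G ?b = g ?a *\<^sub>R (G ?a - G ?b) + (g ?a - g ?b) *\<^sub>R G ?b"
    by (simp add: algebra_simps)
  then have "norm (g ?a *\<^sub>R G ?a - g ?b *\<^sub>R G ?b) \<le> \<bar>g ?a\<bar> * norm (G ?a - G ?b) + \<bar>g ?a - g ?b\<bar> * norm (G ?b)"
    by (metis norm_scaleR norm_triangle_ineq)
  also have "\<dots> \<le> M1 * (S2 * ?D) + (S1 * ?D) * M2"
  proof (rule add_mono)
    show "\<bar>g ?a\<bar> * norm (G ?a - G ?b) \<le> M1 * (S2 * ?D)"
      using assms(2,3) ab xy M1 unfolding hq_def by (intro mult_mono) auto
    show "\<bar>g ?a - g ?b\<bar> * norm (G ?b) \<le> (S1 * ?D) * M2"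
      using assms(1,4) ab xy unfolding hq_def
      by (intro mult_mono) (auto intro: order_trans[OF abs_ge_zero])
  qed
  finally show "norm (g ?a *\<^sub>R G ?a - g ?b *\<^sub>R G ?b) \<le> (M1 * S2 + M2 * S1) * ?D"
    by (simp add: algebra_simps)
qed

lemma hq_cmult:
  fixes g G :: "(int \<Rightarrow> real) \<Rightarrow> complex"
  assumes "hq \<theta> dI p \<beta> g S1" "\<forall>x\<in>Omega. norm (g x) \<le> M1"
    "hq \<theta> dI p \<beta> G S2" "\<forall>x\<in>Omega. norm (G x) \<le> M2"
  shows "hq \<theta> dI p \<beta> (\<lambda>x. g x * G x) (M1 * S2 + M2 * S1)"
  unfolding hq_def
proof (intro allI ballI)
  fix m x y assume xy: "x \<in> Omega" "y \<in> Omega"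
  let ?a = "piK p m x" and ?b = "piK p m y" and ?D = "d x y powr \<beta>"
  have ab: "?a \<in> Omega" "?b \<in> Omega" using xy piK_Om by auto
  have M1: "0 \<le> M1" using assms(2) ab by (meson norm_ge_zero order_trans)
  have "g ?a * G ?a - g ?b * G ?b = g ?a * (G ?a - G ?b) + (g ?a - g ?b) * G ?b"
    by (simp add: algebra_simps)
  then have "norm (g ?a * G ?a - g ?b * G ?b) \<le> norm (g ?a) * norm (G ?a - G ?b) + norm (g ?a - g ?b) * norm (G ?b)"
    by (metis norm_mult norm_triangle_ineq)
  also have "\<dots> \<le> M1 * (S2 * ?D) + (S1 * ?D) * M2"
  proof (rule add_mono)
    show "norm (g ?a) * norm (G ?a - G ?b) \<le> M1 * (S2 * ?D)"
      using assms(2,3) ab xy M1 unfolding hq_def by (intro mult_mono) auto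
    show "norm (g ?a - g ?b) * norm (G ?b) \<le> (S1 * ?D) * M2"
      using assms(1,4) ab xy unfolding hq_def
      by (intro mult_mono) (auto intro: order_trans[OF norm_ge_zero])
  qed
  finally show "norm (g ?a * G ?a - g ?b * G ?b) \<le> (M1 * S2 + M2 * S1) * ?D"
    by (simp add: algebra_simps)
qed

lemma hq_exp:
  fixes f :: "(int \<Rightarrow> real) \<Rightarrow> real"
  assumes "hq \<theta> dI p \<beta> f S" "\<forall>x\<in>Omega. \<bar>f x\<bar> \<le> M"
  shows "hq \<theta> dI p \<beta> (\<lambda>x. exp (f x)) (exp M * S)"
  unfolding hq_def
proof (intro allI ballI)
  fix m x y assume xy: "x \<in> Omega" "y \<in> Omega"
  let ?a = "piK p m x" and ?b = "piK p m y"
  have ab: "?a \<in> Omega" "?b \<in> Omega" using xy piK_Om by auto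
  have "\<bar>exp (f ?a) - exp (f ?b)\<bar> \<le> exp M * \<bar>f ?a - f ?b\<bar>"
    using exp_lip assms(2) ab by blast
  also have "\<dots> \<le> exp M * (S * d x y powr \<beta>)"
    using assms(1) xy unfolding hq_def by (intro mult_left_mono) auto
  finally show "norm (exp (f ?a) - exp (f ?b)) \<le> exp M * S * d x y powr \<beta>" by simp
qed

lemma hq_cexp:
  fixes f :: "(int \<Rightarrow> real) \<Rightarrow> real"
  assumes "hq \<theta> dI p \<beta> f S"
  shows "hq \<theta> dI p \<beta> (\<lambda>x. exp (\<i> * complex_of_real (t * f x))) (\<bar>t\<bar> * S)"
  unfolding hq_def
proof (intro allI ballI)
  fix m x y assume xy: "x \<in> Omega" "y \<in> Omega"
  let ?a = "piK p m x" and ?b = "piK p m y"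
  have "norm (exp (\<i> * complex_of_real (t * f ?a)) - exp (\<i> * complex_of_real (t * f ?b))) \<le> \<bar>t * f ?a - t * f ?b\<bar>"
    by (rule cexp_lip)
  also have "\<dots> = \<bar>t\<bar> * \<bar>f ?a - f ?b\<bar>" by (simp add: abs_mult[symmetric] algebra_simps)
  also have "\<dots> \<le> \<bar>t\<bar> * (S * d x y powr \<beta>)"
    using assms xy unfolding hq_def by (intro mult_left_mono) auto
  finally show "norm (exp (\<i> * complex_of_real (t * f ?a)) - exp (\<i> * complex_of_real (t * f ?b))) \<le> \<bar>t\<bar> * S * d x y powr \<beta>"
    by simp
qed

end



context CM begin

lemma d_sym: "x \<in> Omega \<Longrightarrow> y \<in> Omega \<Longrightarrow> d x y = d y x"
  unfolding dOm_def using dI_sym OmD by (metis (no_types, lifting))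

lemma dpow_le: "x \<in> Omega \<Longrightarrow> y \<in> Omega \<Longrightarrow> d x y powr \<beta> \<le> Bd powr \<beta>"
  using d_nn d_le_Bd beta by (intro powr_mono2) auto

lemma FH_hq:
  fixes G :: "(int \<Rightarrow> real) \<Rightarrow> 'a::real_normed_vector"
  assumes FH: "\<forall>u\<in>Omega. \<forall>v\<in>Omega. norm (G u - G v) \<le> S * d u v powr \<beta>" and S: "0 \<le> S"
  shows "hq \<theta> dI p \<beta> G S"
  unfolding hq_def
proof (intro allI ballI)
  fix m x y assume xy: "x \<in> Omega" "y \<in> Omega"
  have "norm (G (piK p m x) - G (piK p m y)) \<le> S * d (piK p m x) (piK p m y) powr \<beta>"
    using FH piK_Om xy by blast
  also have "\<dots> \<le> S * d x y powr \<beta>"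
    using S d_piK[OF xy] d_nn piK_Om xy beta by (intro mult_left_mono powr_mono2) auto
  finally show "norm (G (piK p m x) - G (piK p m y)) \<le> S * d x y powr \<beta>" .
qed

lemma FH_inC:
  fixes G :: "(int \<Rightarrow> real) \<Rightarrow> 'a::real_normed_vector"
  assumes FH: "\<forall>u\<in>Omega. \<forall>v\<in>Omega. norm (G u - G v) \<le> S * d u v powr \<beta>" and S: "0 \<le> S"
    and M: "\<forall>x\<in>Omega. norm (G x) \<le> M"
  shows "inC \<theta> dI p \<beta> G" "hol_semi \<theta> dI p \<beta> G \<le> S" "sup_norm G \<le> M"
proof -
  have hq: "hq \<theta> dI p \<beta> G S" by (rule FH_hq[OF FH S])
  have bq: "bdd_above (hol_quot \<theta> dI p \<beta> G)"
    using hq_quot_le[OF hq] by (auto intro: bdd_aboveI)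
  have cont: "cont_Om \<theta> dI G"
    unfolding cont_Om_def
  proof (intro ballI allI impI)
    fix x :: "int \<Rightarrow> real" and e :: real assume x: "x \<in> Omega" and e: "0 < e"
    define \<delta> where "\<delta> = (e / (S + 1)) powr (1 / \<beta>)"
    have dpos: "0 < \<delta>" using e S by (simp add: \<delta>_def)
    have dpow: "\<delta> powr \<beta> = e / (S + 1)"
      using e S beta by (simp add: \<delta>_def powr_powr)
    show "\<exists>\<delta>>0. \<forall>y\<in>Omega. d x y < \<delta> \<longrightarrow> norm (G y - G x) < e"
    proof (intro exI conjI ballI impI)
      show "0 < \<delta>" by (rule dpos)
      fix y assume y: "y \<in> Omega" and dy: "d x y < \<delta>"
      have "norm (G y - G x) \<le> S * d y x powr \<beta>" using FH x y by blast
      also have "\<dots> = S * d x y powr \<beta>" using d_sym x y by simp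
      also have "\<dots> \<le> S * (e / (S + 1))"
        using dy d_nn[OF x y] beta S dpow by (intro mult_left_mono) (metis less_imp_le powr_mono2)
      also have "\<dots> < e" using S e by (simp add: field_simps)
      finally show "norm (G y - G x) < e" .
    qed
  qed
  have bn: "bdd_above ((\<lambda>x. norm (G x)) ` Omega)" using M by (auto intro: bdd_aboveI)
  show "inC \<theta> dI p \<beta> G" unfolding inC_def using cont bn bq by blast
  show "hol_semi \<theta> dI p \<beta> G \<le> S"
    unfolding hol_semi_def using hol_quot_ne hq_quot_le[OF hq] by (intro cSup_least) auto
  show "sup_norm G \<le> M"
    unfolding sup_norm_def using Om_ne M by (intro cSUP_least) auto
qed

end

locale CM2 = CM +
  fixes f0 h :: "(int \<Rightarrow> real) \<Rightarrow> real" and lam :: real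
  assumes f0C: "inC \<theta> dI p \<beta> f0"
    and hC: "inC \<theta> dI p \<beta> h"
    and h_pos: "\<forall>x\<in>Omega. 0 < h x"
    and h_eig: "\<forall>x\<in>Omega. Pop b \<zeta> f0 p h x = lam * h x"
    and h_reg: "\<forall>x\<in>Omega. \<forall>y\<in>Omega. h x \<le>
        exp (hol_semi \<theta> dI p \<beta> f0 * (\<eta> powr \<beta> / (1 - \<eta> powr \<beta>)) * dOm \<theta> dI x y powr \<beta>) * h y"
begin

definition "Mf = sup_norm f0"
definition "Sf0 = hol_semi \<theta> dI p \<beta> f0"
definition "Mh = sup_norm h"
definition "Sh = hol_semi \<theta> dI p \<beta> h"
definition "ch = \<bar>hol_semi \<theta> dI p \<beta> f0 * (\<eta> powr \<beta> / (1 - \<eta> powr \<beta>))\<bar>"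
definition "DB = Bd powr \<beta>"
definition "hm = h z0 / exp (ch * DB)"
definition "Hd = ch * exp (ch * DB) * Mh"
definition "Mg = exp Mf * Mh"
definition "Sg = exp Mf * Sh + Mh * (exp Mf * Sf0)"

lemma f0_bnd: "x \<in> Omega \<Longrightarrow> \<bar>f0 x\<bar> \<le> Mf"
  using inC_bound[OF f0C] by (simp add: Mf_def)
lemma h_bnd: "x \<in> Omega \<Longrightarrow> h x \<le> Mh"
  using inC_bound[OF hC, of x] by (simp add: Mh_def)
lemma consts_nn: "0 \<le> Sf0" "0 \<le> Sh" "0 \<le> ch" "0 \<le> DB" "0 \<le> Mh" "0 \<le> Mg" "0 \<le> Sg" "0 \<le> Hd"
proof -
  show S: "0 \<le> Sf0" "0 \<le> Sh" using hol_semi_nn f0C hC by (auto simp: Sf0_def Sh_def)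
  show "0 \<le> ch" "0 \<le> DB" by (auto simp: ch_def DB_def)
  show M: "0 \<le> Mh" using h_bnd[of z0] h_pos z_Om by force
  then show "0 \<le> Mg" by (simp add: Mg_def)
  show "0 \<le> Sg" using S M by (simp add: Sg_def)
  show "0 \<le> Hd" using M by (simp add: Hd_def ch_def)
qed

lemma h_ratio: "x \<in> Omega \<Longrightarrow> y \<in> Omega \<Longrightarrow> h x \<le> exp (ch * d x y powr \<beta>) * h y"
proof -
  assume xy: "x \<in> Omega" "y \<in> Omega"
  have "hol_semi \<theta> dI p \<beta> f0 * (\<eta> powr \<beta> / (1 - \<eta> powr \<beta>)) * d x y powr \<beta> \<le> ch * d x y powr \<beta>"
    unfolding ch_def by (intro mult_right_mono) (auto simp del: abs_mult abs_divide)
  then have "exp (hol_semi \<theta> dI p \<beta> f0 * (\<eta> powr \<beta> / (1 - \<eta> powr \<beta>)) * d x y powr \<beta>) * h y \<le> exp (ch * d x y powr \<beta>) * h y"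
    using h_pos xy by (intro mult_right_mono) auto
  then show ?thesis using h_reg xy by (meson order_trans)
qed

lemma hm_pos: "0 < hm" using h_pos z_Om by (simp add: hm_def)

lemma hm_le: "x \<in> Omega \<Longrightarrow> hm \<le> h x"
proof -
  assume x: "x \<in> Omega"
  have "h z0 \<le> exp (ch * d z0 x powr \<beta>) * h x" using h_ratio z_Om x by simp
  also have "\<dots> \<le> exp (ch * DB) * h x"
    using dpow_le[OF _ x, of z0] z_Om h_pos x consts_nn unfolding DB_def
    by (intro mult_right_mono) (auto intro: mult_left_mono)
  finally show ?thesis by (simp add: hm_def divide_le_eq mult.commute)
qed

lemma h_lip: "x \<in> Omega \<Longrightarrow> y \<in> Omega \<Longrightarrow> \<bar>h x - h y\<bar> \<le> Hd * d x y powr \<beta>"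
proof -
  have one: "h x - h y \<le> Hd * d x y powr \<beta>" if xy: "x \<in> Omega" "y \<in> Omega" for x y
  proof -
    let ?t = "ch * d x y powr \<beta>"
    have t: "0 \<le> ?t" "?t \<le> ch * DB"
      using consts_nn dpow_le[OF xy] unfolding DB_def by (auto intro: mult_left_mono)
    have "h x - h y \<le> (exp ?t - 1) * h y" using h_ratio[OF xy] by (simp add: algebra_simps)
    also have "\<dots> \<le> (?t * exp ?t) * h y" using expm1_le[OF t(1)] h_pos xy by (intro mult_right_mono) auto
    also have "\<dots> \<le> (?t * exp (ch * DB)) * Mh"
      using t h_pos h_bnd xy consts_nn by (intro mult_mono) (auto intro: less_imp_le)
    also have "\<dots> = Hd * d x y powr \<beta>" by (simp add: Hd_def mult_ac)
    finally show ?thesis .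
  qed
  assume xy: "x \<in> Omega" "y \<in> Omega"
  show ?thesis using one[OF xy] one[OF xy(2,1)] d_sym[OF xy] by (simp add: abs_le_iff)
qed

end



lemma inv_diff:
  fixes lam hm hu hv :: real
  assumes "0 < lam" "0 < hm" "hm \<le> hu" "hm \<le> hv"
  shows "\<bar>1/(lam*hu) - 1/(lam*hv)\<bar> \<le> \<bar>hu - hv\<bar> / (lam*hm^2)"
proof -
  have pos: "0 < hu" "0 < hv" using assms by auto
  have "1/(lam*hu) - 1/(lam*hv) = (hv - hu) / (lam * (hu * hv))"
    using pos assms by (simp add: field_simps)
  then have "\<bar>1/(lam*hu) - 1/(lam*hv)\<bar> = \<bar>hu - hv\<bar> / (lam * (hu * hv))"
    using pos assms by (simp add: abs_minus_commute)
  also have "\<dots> \<le> \<bar>hu - hv\<bar> / (lam*hm^2)"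
  proof (rule divide_left_mono)
    have "hm * hm \<le> hu * hv" using assms by (intro mult_mono) auto
    then show "lam * hm ^ 2 \<le> lam * (hu * hv)" using assms by (simp add: power2_eq_square)
    show "0 < lam * (hu * hv) * (lam * hm ^ 2)" using assms pos by simp
  qed simp
  finally show ?thesis .
qed

lemma coef_bound:
  fixes lam hm hu hv ga ga' Mg Sg Hd D :: real
  assumes "0 < lam" "0 < hm" "hm \<le> hu" "hm \<le> hv" "0 \<le> ga'" "ga' \<le> Mg"
    "\<bar>ga - ga'\<bar> \<le> Sg * D" "\<bar>hu - hv\<bar> \<le> Hd * D" "0 \<le> D"
  shows "\<bar>ga/(lam*hu) - ga'/(lam*hv)\<bar> \<le> (Sg/(lam*hm) + Mg*Hd/(lam*hm^2)) * D"
proof -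
  have pos: "0 < hu" "0 < hv" using assms by auto
  have eq: "ga/(lam*hu) - ga'/(lam*hv) = (ga - ga') * (1/(lam*hu)) + ga' * (1/(lam*hu) - 1/(lam*hv))"
    using pos assms(1) by (simp add: field_simps)
  have t1: "\<bar>(ga - ga') * (1/(lam*hu))\<bar> \<le> (Sg * D) * (1/(lam*hm))"
  proof -
    have "1/(lam*hu) \<le> 1/(lam*hm)" using assms by (intro divide_left_mono mult_left_mono) auto
    moreover have "\<bar>(ga - ga') * (1/(lam*hu))\<bar> = \<bar>ga - ga'\<bar> * (1/(lam*hu))"
      using pos assms by (simp add: abs_mult)
    ultimately show ?thesis using assms pos
      by (metis abs_ge_zero mult_mono order_trans zero_le_divide_1_iff less_imp_le mult_pos_pos)
  qed
  have t2: "\<bar>ga' * (1/(lam*hu) - 1/(lam*hv))\<bar> \<le> Mg * ((Hd * D) / (lam*hm^2))"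
  proof -
    have X: "\<bar>1/(lam*hu) - 1/(lam*hv)\<bar> \<le> (Hd * D) / (lam*hm^2)"
      using inv_diff[OF assms(1-4)] assms by (meson divide_right_mono order_trans zero_le_power2 mult_nonneg_nonneg less_imp_le assms(2))
    have E: "\<bar>ga' * (1/(lam*hu) - 1/(lam*hv))\<bar> = ga' * \<bar>1/(lam*hu) - 1/(lam*hv)\<bar>"
      using assms by (simp add: abs_mult)
    have "ga' * \<bar>1/(lam*hu) - 1/(lam*hv)\<bar> \<le> Mg * ((Hd * D) / (lam*hm^2))"
      using X assms(5,6) by (intro mult_mono) auto
    then show ?thesis using E by simp
  qed
  have "\<bar>ga/(lam*hu) - ga'/(lam*hv)\<bar> \<le> (Sg * D) * (1/(lam*hm)) + Mg * ((Hd * D) / (lam*hm^2))"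
    unfolding eq using t1 t2 abs_triangle_ineq by (meson add_mono order_trans)
  also have "\<dots> = (Sg/(lam*hm) + Mg*Hd/(lam*hm^2)) * D" by (simp add: field_simps)
  finally show ?thesis .
qed




context CM2 begin

lemma f0_bnd': "\<forall>x\<in>Omega. \<bar>f0 x\<bar> \<le> Mf" using f0_bnd by blast

lemma hq_g: "hq \<theta> dI p \<beta> (\<lambda>x. exp (f0 x) *\<^sub>R h x) Sg"
proof -
  have e: "hq \<theta> dI p \<beta> (\<lambda>x. exp (f0 x)) (exp Mf * Sf0)"
    using hq_exp[OF inC_hq[OF f0C] f0_bnd'] by (simp add: Sf0_def)
  have eb: "\<forall>x\<in>Omega. \<bar>exp (f0 x)\<bar> \<le> exp Mf" using f0_bnd by (fastforce simp: abs_le_iff)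
  have hh: "hq \<theta> dI p \<beta> h Sh" using inC_hq[OF hC] by (simp add: Sh_def)
  have hb: "\<forall>x\<in>Omega. norm (h x) \<le> Mh" using h_bnd h_pos by (simp add: less_imp_le)
  show ?thesis using hq_scaleR[OF e eb hh hb] by (simp add: Sg_def)
qed

lemma hq_g': "hq \<theta> dI p \<beta> (\<lambda>x. exp (f0 x) * h x) Sg"
  using hq_g by simp

lemma g_bnd: "x \<in> Omega \<Longrightarrow> 0 \<le> exp (f0 x) * h x \<and> exp (f0 x) * h x \<le> Mg"
proof -
  assume x: "x \<in> Omega"
  have "exp (f0 x) \<le> exp Mf" using f0_bnd[OF x] by auto
  moreover have "0 < h x" "h x \<le> Mh" using h_pos h_bnd x by auto
  ultimately have "exp (f0 x) * h x \<le> exp Mf * Mh" by (intro mult_mono) auto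
  then show ?thesis using \<open>0 < h x\<close> unfolding Mg_def by simp
qed

lemma Pk_h_lim: "u \<in> Omega \<Longrightarrow> (\<lambda>k. Pk b \<zeta> f0 p k h u) \<longlonglongrightarrow> lam * h u"
proof -
  assume u: "u \<in> Omega"
  have "convergent (\<lambda>k. Pk b \<zeta> f0 p k h u)" by (rule Pk_conv[OF hq_g consts_nn(7) u])
  then have "(\<lambda>k. Pk b \<zeta> f0 p k h u) \<longlonglongrightarrow> Pop b \<zeta> f0 p h u"
    unfolding Pop_def by (simp add: convergent_LIMSEQ_iff)
  then show ?thesis using h_eig u by simp
qed

lemma Pk_h_lower: "u \<in> Omega \<Longrightarrow> exp (- Mf) * hm \<le> Pk b \<zeta> f0 p k h u"
proof -
  assume u: "u \<in> Omega"
  define N where "N = real b ^ (2 * k + 1)"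
  have N: "0 < N" "real (card (branch_choices b k)) = N" using bpos by (auto simp: N_def ch_card)
  have "(\<Sum>c\<in>branch_choices b k. exp (- Mf) * hm) \<le>
     (\<Sum>c\<in>branch_choices b k. exp (f0 (piK p k (zeta_x \<zeta> k c u))) * h (piK p k (zeta_x \<zeta> k c u)))"
  proof (rule sum_mono)
    fix c assume c: "c \<in> branch_choices b k"
    have a: "piK p k (zeta_x \<zeta> k c u) \<in> Omega" using zx_Om[OF u c] piK_Om by simp
    have "exp (- Mf) \<le> exp (f0 (piK p k (zeta_x \<zeta> k c u)))" using f0_bnd[OF a] by auto
    then show "exp (- Mf) * hm \<le> exp (f0 (piK p k (zeta_x \<zeta> k c u))) * h (piK p k (zeta_x \<zeta> k c u))"
      using hm_le[OF a] hm_pos by (intro mult_mono) auto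
  qed
  then have "N * (exp (- Mf) * hm) \<le> (\<Sum>c\<in>branch_choices b k. exp (f0 (piK p k (zeta_x \<zeta> k c u))) * h (piK p k (zeta_x \<zeta> k c u)))"
    using N by simp
  moreover have "Pk b \<zeta> f0 p k h u = (\<Sum>c\<in>branch_choices b k. exp (f0 (piK p k (zeta_x \<zeta> k c u))) * h (piK p k (zeta_x \<zeta> k c u))) / N"
    unfolding Pk_def N_def by simp
  ultimately show ?thesis using N by (simp add: pos_le_divide_eq mult.commute)
qed

lemma lam_pos: "0 < lam"
proof -
  have "exp (- Mf) * hm \<le> lam * h z0"
    using Pk_h_lim[OF z_Om(1)] Pk_h_lower[OF z_Om(1)]
    by (intro tendsto_lowerbound) (auto)
  then have "0 < lam * h z0" using hm_pos by (meson exp_gt_zero mult_pos_pos order_less_le_trans)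
  moreover have "0 < h z0" using h_pos z_Om by blast
  ultimately show ?thesis by (simp add: zero_less_mult_iff)
qed

end



context CM2 begin

definition "K0 = Sg/(lam*hm) + Mg*Hd/(lam*hm^2)"

lemma K0_nn: "0 \<le> K0"
  using consts_nn lam_pos hm_pos by (simp add: K0_def)

lemma core_conv:
  fixes \<Phi> :: "(int \<Rightarrow> real) \<Rightarrow> complex"
  assumes M: "\<forall>x\<in>Omega. norm (\<Phi> x) \<le> M" and S: "hq \<theta> dI p \<beta> \<Phi> S" "0 \<le> S" and u: "u \<in> Omega"
  shows "(\<lambda>k. Pk b \<zeta> f0 p k (\<lambda>y. h y *\<^sub>R \<Phi> y) u) \<longlonglongrightarrow> Pop b \<zeta> f0 p (\<lambda>y. h y *\<^sub>R \<Phi> y) u"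
proof -
  have M0: "0 \<le> M" using M z_Om by (meson norm_ge_zero order_trans)
  have gb: "\<forall>x\<in>Omega. \<bar>exp (f0 x) * h x\<bar> \<le> Mg" using g_bnd by auto
  have "hq \<theta> dI p \<beta> (\<lambda>x. (exp (f0 x) * h x) *\<^sub>R \<Phi> x) (Mg * S + M * Sg)"
    by (rule hq_scaleR[OF hq_g' gb S(1) M])
  then have "hq \<theta> dI p \<beta> (\<lambda>x. exp (f0 x) *\<^sub>R (h x *\<^sub>R \<Phi> x)) (Mg * S + M * Sg)"
    by simp
  then have "convergent (\<lambda>k. Pk b \<zeta> f0 p k (\<lambda>y. h y *\<^sub>R \<Phi> y) u)"
    by (rule Pk_conv) (use consts_nn S M0 u in auto)
  then show ?thesis unfolding Pop_def by (simp add: convergent_LIMSEQ_iff)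
qed

lemma core_sup:
  fixes \<Phi> :: "(int \<Rightarrow> real) \<Rightarrow> complex"
  assumes M: "\<forall>x\<in>Omega. norm (\<Phi> x) \<le> M" and S: "hq \<theta> dI p \<beta> \<Phi> S" "0 \<le> S" and u: "u \<in> Omega"
  shows "norm (Lop b \<zeta> f0 p h lam \<Phi> u) \<le> M"
proof -
  let ?F = "\<lambda>y. h y *\<^sub>R \<Phi> y"
  have M0: "0 \<le> M" using M z_Om by (meson norm_ge_zero order_trans)
  have bnd: "norm (Pk b \<zeta> f0 p k ?F u) \<le> M * Pk b \<zeta> f0 p k h u" for k
  proof -
    define N where "N = real b ^ (2 * k + 1)"
    have N: "0 < N" using bpos by (simp add: N_def)
    have "norm (\<Sum>c\<in>branch_choices b k. exp (f0 (piK p k (zeta_x \<zeta> k c u))) *\<^sub>R (h (piK p k (zeta_x \<zeta> k c u)) *\<^sub>R \<Phi> (piK p k (zeta_x \<zeta> k c u))))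
       \<le> (\<Sum>c\<in>branch_choices b k. M * (exp (f0 (piK p k (zeta_x \<zeta> k c u))) * h (piK p k (zeta_x \<zeta> k c u))))"
    proof (rule sum_norm_le)
      fix c assume c: "c \<in> branch_choices b k"
      have a: "piK p k (zeta_x \<zeta> k c u) \<in> Omega" using zx_Om[OF u c] piK_Om by simp
      have "norm (exp (f0 (piK p k (zeta_x \<zeta> k c u))) *\<^sub>R (h (piK p k (zeta_x \<zeta> k c u)) *\<^sub>R \<Phi> (piK p k (zeta_x \<zeta> k c u))))
          = (exp (f0 (piK p k (zeta_x \<zeta> k c u))) * h (piK p k (zeta_x \<zeta> k c u))) * norm (\<Phi> (piK p k (zeta_x \<zeta> k c u)))"
        using h_pos a by (simp add: less_imp_le)
      also have "\<dots> \<le> (exp (f0 (piK p k (zeta_x \<zeta> k c u))) * h (piK p k (zeta_x \<zeta> k c u))) * M"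
        using g_bnd[OF a] M a by (intro mult_left_mono) auto
      finally show "norm (exp (f0 (piK p k (zeta_x \<zeta> k c u))) *\<^sub>R (h (piK p k (zeta_x \<zeta> k c u)) *\<^sub>R \<Phi> (piK p k (zeta_x \<zeta> k c u))))
          \<le> M * (exp (f0 (piK p k (zeta_x \<zeta> k c u))) * h (piK p k (zeta_x \<zeta> k c u)))" by (simp add: mult_ac)
    qed
    then show ?thesis using N unfolding Pk_def
      by (simp add: N_def[symmetric] sum_distrib_left[symmetric] divide_right_mono)
  qed
  have lim1: "(\<lambda>k. norm (Pk b \<zeta> f0 p k ?F u)) \<longlonglongrightarrow> norm (Pop b \<zeta> f0 p ?F u)"
    by (intro tendsto_norm core_conv[OF M S u])
  have lim2: "(\<lambda>k. M * Pk b \<zeta> f0 p k h u) \<longlonglongrightarrow> M * (lam * h u)"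
    by (intro tendsto_mult tendsto_const Pk_h_lim[OF u])
  have "norm (Pop b \<zeta> f0 p ?F u) \<le> M * (lam * h u)"
    using lim1 lim2 bnd by (intro tendsto_le[OF trivial_limit_sequentially lim2 lim1]) auto
  moreover have "0 < lam * h u" using lam_pos h_pos u by simp
  ultimately show ?thesis unfolding Lop_def by (simp add: divide_le_eq mult.commute)
qed

end



context CM2 begin

lemma hqD: "hq \<theta> dI p \<beta> G C \<Longrightarrow> x \<in> Omega \<Longrightarrow> y \<in> Omega \<Longrightarrow>
   norm (G (piK p m x) - G (piK p m y)) \<le> C * d x y powr \<beta>"
  unfolding hq_def by blast

lemma core_hol_k:
  fixes \<Phi> :: "(int \<Rightarrow> real) \<Rightarrow> complex"
  assumes M: "\<forall>x\<in>Omega. norm (\<Phi> x) \<le> M" and S: "hq \<theta> dI p \<beta> \<Phi> S" "0 \<le> S"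
    and u: "u \<in> Omega" and v: "v \<in> Omega"
  shows "norm ((1/(lam*h u)) *\<^sub>R Pk b \<zeta> f0 p k (\<lambda>y. h y *\<^sub>R \<Phi> y) u - (1/(lam*h v)) *\<^sub>R Pk b \<zeta> f0 p k (\<lambda>y. h y *\<^sub>R \<Phi> y) v)
     \<le> (Pk b \<zeta> f0 p k h u / (lam*h u)) * (S * (\<eta> powr \<beta> * d u v powr \<beta>)) + K0 * d u v powr \<beta> * M"
proof -
  define D where "D = d u v powr \<beta>"
  define N where "N = real b ^ (2 * k + 1)"
  define a where "a = (\<lambda>c. piK p k (zeta_x \<zeta> k c u))"
  define a' where "a' = (\<lambda>c. piK p k (zeta_x \<zeta> k c v))"
  define gu where "gu = (\<lambda>c. exp (f0 (a c)) * h (a c))"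
  define gv where "gv = (\<lambda>c. exp (f0 (a' c)) * h (a' c))"
  define hu where "hu = h u"
  define hv where "hv = h v"
  let ?C = "branch_choices b k"
  have N: "0 < N" "real (card ?C) = N" using bpos by (auto simp: N_def ch_card)
  have D0: "0 \<le> D" by (simp add: D_def)
  have M0: "0 \<le> M" using M z_Om by (meson norm_ge_zero order_trans)
  have huv: "hm \<le> hu" "hm \<le> hv" using hm_le u v by (auto simp: hu_def hv_def)
  have PkFu: "Pk b \<zeta> f0 p k (\<lambda>y. h y *\<^sub>R \<Phi> y) u = (1/N) *\<^sub>R (\<Sum>c\<in>?C. gu c *\<^sub>R \<Phi> (a c))"
    by (simp add: Pk_def N_def gu_def a_def)
  have PkFv: "Pk b \<zeta> f0 p k (\<lambda>y. h y *\<^sub>R \<Phi> y) v = (1/N) *\<^sub>R (\<Sum>c\<in>?C. gv c *\<^sub>R \<Phi> (a' c))"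
    by (simp add: Pk_def N_def gv_def a'_def)
  have Pkhu: "Pk b \<zeta> f0 p k h u = (1/N) * (\<Sum>c\<in>?C. gu c)"
    by (simp add: Pk_def N_def gu_def a_def)
  define T where "T = (\<lambda>c. (gu c/(lam*hu)) *\<^sub>R (\<Phi> (a c) - \<Phi> (a' c)) + (gu c/(lam*hu) - gv c/(lam*hv)) *\<^sub>R \<Phi> (a' c))"
  have T_eq: "T c = (gu c/(lam*hu)) *\<^sub>R \<Phi> (a c) - (gv c/(lam*hv)) *\<^sub>R \<Phi> (a' c)" for c
    by (simp add: T_def algebra_simps)
  have LHS: "(1/(lam*h u)) *\<^sub>R Pk b \<zeta> f0 p k (\<lambda>y. h y *\<^sub>R \<Phi> y) u - (1/(lam*h v)) *\<^sub>R Pk b \<zeta> f0 p k (\<lambda>y. h y *\<^sub>R \<Phi> y) v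
      = (1/N) *\<^sub>R (\<Sum>c\<in>?C. T c)"
    unfolding PkFu PkFv T_eq sum_subtractf scaleR_diff_right
    by (simp add: scaleR_sum_right hu_def hv_def mult_ac)
  have Tb: "norm (T c) \<le> (gu c/(lam*hu)) * (S * (\<eta> powr \<beta> * D)) + K0 * D * M" if c: "c \<in> ?C" for c
  proof -
    have ac: "a c \<in> Omega" "a' c \<in> Omega" using zx_Om[OF u c] zx_Om[OF v c] piK_Om by (auto simp: a_def a'_def)
    have dd: "d (a c) (a' c) \<le> \<eta> * d u v" unfolding a_def a'_def by (rule d_branch[OF u v c])
    have dd1: "d (a c) (a' c) powr \<beta> \<le> \<eta> powr \<beta> * D"
    proof -
      have "d (a c) (a' c) powr \<beta> \<le> (\<eta> * d u v) powr \<beta>"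
        using dd d_nn[OF ac] beta by (intro powr_mono2) auto
      then show ?thesis using eta d_nn[OF u v] by (simp add: powr_mult D_def)
    qed
    have etab: "\<eta> powr \<beta> \<le> 1" using eta beta by (simp add: powr_le1)
    have dd2: "d (a c) (a' c) powr \<beta> \<le> D"
      using dd1 mult_right_mono[OF etab D0] by simp
    have pa: "piK p k (a c) = a c" "piK p k (a' c) = a' c" by (simp_all add: a_def a'_def piK_idem)
    have \<Phi>d: "norm (\<Phi> (a c) - \<Phi> (a' c)) \<le> S * (\<eta> powr \<beta> * D)"
    proof -
      have "norm (\<Phi> (piK p k (a c)) - \<Phi> (piK p k (a' c))) \<le> S * d (a c) (a' c) powr \<beta>"
        by (rule hqD[OF S(1) ac])
      also have "\<dots> \<le> S * (\<eta> powr \<beta> * D)" using dd1 S(2) by (rule mult_left_mono)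
      finally show ?thesis using pa by simp
    qed
    have gd: "\<bar>gu c - gv c\<bar> \<le> Sg * D"
    proof -
      have "\<bar>exp (f0 (piK p k (a c))) * h (piK p k (a c)) - exp (f0 (piK p k (a' c))) * h (piK p k (a' c))\<bar> \<le> Sg * d (a c) (a' c) powr \<beta>"
        using hqD[OF hq_g' ac, of k] by (simp only: real_norm_def)
      also have "\<dots> \<le> Sg * D" using dd2 consts_nn by (intro mult_left_mono) auto
      finally show ?thesis using pa by (simp add: gu_def gv_def)
    qed
    have hd: "\<bar>hu - hv\<bar> \<le> Hd * D" using h_lip[OF u v] by (simp add: hu_def hv_def D_def)
    have gvb: "0 \<le> gv c" "gv c \<le> Mg" using g_bnd[OF ac(2)] by (auto simp: gv_def)
    have gu0: "0 \<le> gu c" using g_bnd[OF ac(1)] by (auto simp: gu_def)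
    have coef: "\<bar>gu c/(lam*hu) - gv c/(lam*hv)\<bar> \<le> K0 * D"
      unfolding K0_def by (rule coef_bound[OF lam_pos hm_pos huv gvb gd hd D0])
    have "norm (T c) \<le> norm ((gu c/(lam*hu)) *\<^sub>R (\<Phi> (a c) - \<Phi> (a' c))) + norm ((gu c/(lam*hu) - gv c/(lam*hv)) *\<^sub>R \<Phi> (a' c))"
      unfolding T_def by (rule norm_triangle_ineq)
    also have "\<dots> = (gu c/(lam*hu)) * norm (\<Phi> (a c) - \<Phi> (a' c)) + \<bar>gu c/(lam*hu) - gv c/(lam*hv)\<bar> * norm (\<Phi> (a' c))"
      using gu0 lam_pos huv hm_pos by simp
    also have "\<dots> \<le> (gu c/(lam*hu)) * (S * (\<eta> powr \<beta> * D)) + K0 * D * M"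
    proof (rule add_mono)
      show "(gu c/(lam*hu)) * norm (\<Phi> (a c) - \<Phi> (a' c)) \<le> (gu c/(lam*hu)) * (S * (\<eta> powr \<beta> * D))"
        using \<Phi>d gu0 lam_pos huv hm_pos by (intro mult_left_mono) auto
      show "\<bar>gu c/(lam*hu) - gv c/(lam*hv)\<bar> * norm (\<Phi> (a' c)) \<le> K0 * D * M"
        using coef M ac K0_nn D0 by (intro mult_mono) auto
    qed
    finally show ?thesis .
  qed
  have "norm (\<Sum>c\<in>?C. T c) \<le> (\<Sum>c\<in>?C. (gu c/(lam*hu)) * (S * (\<eta> powr \<beta> * D)) + K0 * D * M)"
    by (rule sum_norm_le) (rule Tb)
  also have "\<dots> = (\<Sum>c\<in>?C. gu c) / (lam*hu) * (S * (\<eta> powr \<beta> * D)) + N * (K0 * D * M)"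
    using N by (simp add: sum.distrib sum_divide_distrib[symmetric] sum_distrib_right[symmetric])
  finally have "norm ((1/N) *\<^sub>R (\<Sum>c\<in>?C. T c)) \<le> (1/N) * ((\<Sum>c\<in>?C. gu c) / (lam*hu) * (S * (\<eta> powr \<beta> * D)) + N * (K0 * D * M))"
    using N by (simp add: divide_right_mono)
  also have "\<dots> = (Pk b \<zeta> f0 p k h u / (lam*h u)) * (S * (\<eta> powr \<beta> * D)) + K0 * D * M"
    using N unfolding Pkhu hu_def by (simp add: field_simps)
  finally show ?thesis unfolding LHS D_def .
qed

end



context CM2 begin

lemma core_hol:
  fixes \<Phi> :: "(int \<Rightarrow> real) \<Rightarrow> complex"
  assumes M: "\<forall>x\<in>Omega. norm (\<Phi> x) \<le> M" and S: "hq \<theta> dI p \<beta> \<Phi> S" "0 \<le> S"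
    and u: "u \<in> Omega" and v: "v \<in> Omega"
  shows "norm (Lop b \<zeta> f0 p h lam \<Phi> u - Lop b \<zeta> f0 p h lam \<Phi> v) \<le> (\<eta> powr \<beta> * S + K0 * M) * d u v powr \<beta>"
proof -
  let ?F = "\<lambda>y. h y *\<^sub>R \<Phi> y"
  have hu: "0 < lam * h u" using lam_pos h_pos u by simp
  have l1: "(\<lambda>k. norm ((1/(lam*h u)) *\<^sub>R Pk b \<zeta> f0 p k ?F u - (1/(lam*h v)) *\<^sub>R Pk b \<zeta> f0 p k ?F v))
      \<longlonglongrightarrow> norm (Lop b \<zeta> f0 p h lam \<Phi> u - Lop b \<zeta> f0 p h lam \<Phi> v)"
    unfolding Lop_def
    by (intro tendsto_norm tendsto_diff tendsto_scaleR tendsto_const core_conv[OF M S u] core_conv[OF M S v])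
  have l2: "(\<lambda>k. (Pk b \<zeta> f0 p k h u / (lam*h u)) * (S * (\<eta> powr \<beta> * d u v powr \<beta>)) + K0 * d u v powr \<beta> * M)
      \<longlonglongrightarrow> ((lam * h u) / (lam*h u)) * (S * (\<eta> powr \<beta> * d u v powr \<beta>)) + K0 * d u v powr \<beta> * M"
    by (intro tendsto_add tendsto_mult tendsto_divide tendsto_const Pk_h_lim[OF u]) (use hu in auto)
  have "norm (Lop b \<zeta> f0 p h lam \<Phi> u - Lop b \<zeta> f0 p h lam \<Phi> v)
      \<le> ((lam * h u) / (lam*h u)) * (S * (\<eta> powr \<beta> * d u v powr \<beta>)) + K0 * d u v powr \<beta> * M"
    by (rule tendsto_le[OF trivial_limit_sequentially l2 l1]) (intro always_eventually allI core_hol_k[OF M S u v])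
  also have "\<dots> = (\<eta> powr \<beta> * S + K0 * M) * d u v powr \<beta>"
  proof -
    have "h u \<noteq> 0" "lam \<noteq> 0" using lam_pos h_pos u by auto
    then show ?thesis by (simp add: algebra_simps)
  qed
  finally show ?thesis .
qed

lemma step:
  fixes \<Phi> :: "(int \<Rightarrow> real) \<Rightarrow> complex" and Einv :: "(int \<Rightarrow> real) \<Rightarrow> (int \<Rightarrow> real)"
  assumes EOm: "\<forall>x\<in>Omega. Einv x \<in> Omega"
    and Elip: "\<forall>x\<in>Omega. \<forall>y\<in>Omega. d (Einv x) (Einv y) \<le> CE * d x y" and CE: "0 < CE"
    and fC: "inC \<theta> dI p \<beta> f"
    and \<Phi>C: "inC \<theta> dI p \<beta> \<Phi>" and M: "sup_norm \<Phi> \<le> M" and S: "hol_semi \<theta> dI p \<beta> \<Phi> \<le> S"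
  shows "inC \<theta> dI p \<beta> (Lft b \<zeta> f0 p h lam Einv f t \<Phi>)"
    "sup_norm (Lft b \<zeta> f0 p h lam Einv f t \<Phi>) \<le> M"
    "hol_semi \<theta> dI p \<beta> (Lft b \<zeta> f0 p h lam Einv f t \<Phi>)
       \<le> CE powr \<beta> * (\<eta> powr \<beta> * (S + M * (\<bar>t\<bar> * hol_semi \<theta> dI p \<beta> f)) + K0 * M)"
proof -
  let ?Sf = "hol_semi \<theta> dI p \<beta> f"
  define \<Phi>t where "\<Phi>t = (\<lambda>y. exp (\<i> * complex_of_real (t * f y)) * \<Phi> y)"
  have S0: "0 \<le> S" using hol_semi_nn[OF \<Phi>C] S by linarith
  have Mb: "\<forall>x\<in>Omega. norm (\<Phi> x) \<le> M" using inC_bound[OF \<Phi>C] M by (meson order_trans)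
  have M0: "0 \<le> M" using Mb z_Om by (meson norm_ge_zero order_trans)
  have Sf0: "0 \<le> ?Sf" by (rule hol_semi_nn[OF fC])
  have Mt: "\<forall>x\<in>Omega. norm (\<Phi>t x) \<le> M"
    using Mb by (simp add: \<Phi>t_def norm_mult)
  have e1: "\<forall>x\<in>Omega. norm (exp (\<i> * complex_of_real (t * f x))) \<le> 1" by simp
  have hqt: "hq \<theta> dI p \<beta> \<Phi>t (1 * S + M * (\<bar>t\<bar> * ?Sf))"
    unfolding \<Phi>t_def
    by (rule hq_cmult[OF hq_cexp[OF inC_hq[OF fC]] e1 hq_mono[OF inC_hq[OF \<Phi>C] S] Mb])
  define S' where "S' = S + M * (\<bar>t\<bar> * ?Sf)"
  have S'0: "0 \<le> S'" using S0 M0 Sf0 by (simp add: S'_def)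
  have hqt': "hq \<theta> dI p \<beta> \<Phi>t S'" using hqt by (simp add: S'_def)
  have Lft_eq: "Lft b \<zeta> f0 p h lam Einv f t \<Phi> = (\<lambda>x. Lop b \<zeta> f0 p h lam \<Phi>t (Einv x))"
    by (simp add: Lft_def calL_def \<Phi>t_def fun_eq_iff)
  define S'' where "S'' = CE powr \<beta> * (\<eta> powr \<beta> * S' + K0 * M)"
  have S''0: "0 \<le> S''" using S'0 K0_nn M0 by (simp add: S''_def)
  have FH: "\<forall>u\<in>Omega. \<forall>v\<in>Omega. norm (Lft b \<zeta> f0 p h lam Einv f t \<Phi> u - Lft b \<zeta> f0 p h lam Einv f t \<Phi> v) \<le> S'' * d u v powr \<beta>"
  proof (intro ballI)
    fix u v assume u: "u \<in> Omega" and v: "v \<in> Omega"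
    have Eu: "Einv u \<in> Omega" "Einv v \<in> Omega" using EOm u v by auto
    have "norm (Lop b \<zeta> f0 p h lam \<Phi>t (Einv u) - Lop b \<zeta> f0 p h lam \<Phi>t (Einv v))
       \<le> (\<eta> powr \<beta> * S' + K0 * M) * d (Einv u) (Einv v) powr \<beta>"
      by (rule core_hol[OF Mt hqt' S'0 Eu])
    also have "\<dots> \<le> (\<eta> powr \<beta> * S' + K0 * M) * (CE * d u v) powr \<beta>"
      using Elip u v d_nn[OF Eu] S'0 K0_nn M0 beta by (intro mult_left_mono powr_mono2) auto
    also have "\<dots> = S'' * d u v powr \<beta>"
      using CE d_nn[OF u v] by (simp add: S''_def powr_mult mult_ac)
    finally show "norm (Lft b \<zeta> f0 p h lam Einv f t \<Phi> u - Lft b \<zeta> f0 p h lam Einv f t \<Phi> v) \<le> S'' * d u v powr \<beta>"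
      unfolding Lft_eq .
  qed
  have Mb': "\<forall>x\<in>Omega. norm (Lft b \<zeta> f0 p h lam Einv f t \<Phi> x) \<le> M"
    unfolding Lft_eq using core_sup[OF Mt hqt' S'0] EOm by blast
  note R = FH_inC[OF FH S''0 Mb']
  show "inC \<theta> dI p \<beta> (Lft b \<zeta> f0 p h lam Einv f t \<Phi>)" by (rule R(1))
  show "sup_norm (Lft b \<zeta> f0 p h lam Einv f t \<Phi>) \<le> M" by (rule R(3))
  show "hol_semi \<theta> dI p \<beta> (Lft b \<zeta> f0 p h lam Einv f t \<Phi>)
       \<le> CE powr \<beta> * (\<eta> powr \<beta> * (S + M * (\<bar>t\<bar> * ?Sf)) + K0 * M)"
    using R(2) by (simp add: S''_def S'_def)
qed

end



context CM2 begin

lemma iter: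
  fixes Einv :: "(int \<Rightarrow> real) \<Rightarrow> (int \<Rightarrow> real)"
  assumes EOm: "\<forall>x\<in>Omega. Einv x \<in> Omega"
    and Elip: "\<forall>x\<in>Omega. \<forall>y\<in>Omega. d (Einv x) (Einv y) \<le> CE * d x y" and CE: "0 < CE" "CE * \<eta> < 1"
    and fC: "inC \<theta> dI p \<beta> f"
  shows "\<exists>C9>0. \<forall>t. \<bar>t\<bar> < 1 \<longrightarrow>
           (\<forall>n. \<forall>\<Phi> :: (int \<Rightarrow> real) \<Rightarrow> complex. inC \<theta> dI p \<beta> \<Phi> \<longrightarrow>
              inC \<theta> dI p \<beta> ((Lft b \<zeta> f0 p h lam Einv f t ^^ n) \<Phi>) \<and>
              Cnorm \<theta> dI p \<beta> ((Lft b \<zeta> f0 p h lam Einv f t ^^ n) \<Phi>) \<le> C9 * Cnorm \<theta> dI p \<beta> \<Phi>)"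
proof -
  let ?Sf = "hol_semi \<theta> dI p \<beta> f"
  define \<rho> where "\<rho> = CE powr \<beta> * \<eta> powr \<beta>"
  define A where "A = CE powr \<beta> * (\<eta> powr \<beta> * ?Sf + K0)"
  have Sf0: "0 \<le> ?Sf" by (rule hol_semi_nn[OF fC])
  have \<rho>1: "\<rho> < 1"
  proof -
    have "\<rho> = (CE * \<eta>) powr \<beta>" using CE eta by (simp add: \<rho>_def powr_mult)
    also have "\<dots> < 1" using CE eta beta by (simp add: powr01_less_one)
    finally show ?thesis .
  qed
  have \<rho>0: "0 \<le> \<rho>" by (simp add: \<rho>_def)
  have A0: "0 \<le> A" using Sf0 K0_nn by (simp add: A_def)
  define C9 where "C9 = 1 + A / (1 - \<rho>)"
  have C9: "1 \<le> C9" using A0 \<rho>1 by (simp add: C9_def)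
  show ?thesis
  proof (intro exI conjI allI impI)
    show "0 < C9" using C9 by simp
    fix t :: real and n :: nat and \<Phi> :: "(int \<Rightarrow> real) \<Rightarrow> complex"
    assume t: "\<bar>t\<bar> < 1" and \<Phi>: "inC \<theta> dI p \<beta> \<Phi>"
    define M0 where "M0 = sup_norm \<Phi>"
    define S0 where "S0 = hol_semi \<theta> dI p \<beta> \<Phi>"
    define T where "T = S0 + A * M0 / (1 - \<rho>)"
    have S0: "0 \<le> S0" using hol_semi_nn[OF \<Phi>] by (simp add: S0_def)
    have M0: "0 \<le> M0" using inC_bound[OF \<Phi> z_Om(1)] unfolding M0_def by (meson norm_ge_zero order_trans)
    have AM: "0 \<le> A * M0 / (1 - \<rho>)" using A0 M0 \<rho>1 by simp
    have inv: "inC \<theta> dI p \<beta> ((Lft b \<zeta> f0 p h lam Einv f t ^^ m) \<Phi>) \<and>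
           sup_norm ((Lft b \<zeta> f0 p h lam Einv f t ^^ m) \<Phi>) \<le> M0 \<and>
           hol_semi \<theta> dI p \<beta> ((Lft b \<zeta> f0 p h lam Einv f t ^^ m) \<Phi>) \<le> T" for m
    proof (induction m)
      case 0
      then show ?case using \<Phi> AM by (simp add: M0_def S0_def T_def)
    next
      case (Suc m)
      let ?P = "(Lft b \<zeta> f0 p h lam Einv f t ^^ m) \<Phi>"
      note st = step[OF EOm Elip CE(1) fC, of ?P M0 T t]
      have b1: "CE powr \<beta> * (\<eta> powr \<beta> * (T + M0 * (\<bar>t\<bar> * ?Sf)) + K0 * M0) \<le> \<rho> * T + A * M0"
      proof -
        have "M0 * (\<bar>t\<bar> * ?Sf) \<le> M0 * ?Sf"
          using t M0 Sf0 by (intro mult_left_mono) (auto intro: mult_left_le_one_le)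
        then have "CE powr \<beta> * (\<eta> powr \<beta> * (T + M0 * (\<bar>t\<bar> * ?Sf)) + K0 * M0)
            \<le> CE powr \<beta> * (\<eta> powr \<beta> * (T + M0 * ?Sf) + K0 * M0)"
          by (intro mult_left_mono add_right_mono) auto
        also have "\<dots> = \<rho> * T + A * M0" by (simp add: \<rho>_def A_def algebra_simps)
        finally show ?thesis .
      qed
      have b2: "\<rho> * T + A * M0 \<le> T"
      proof -
        have "A * M0 = (1 - \<rho>) * (A * M0 / (1 - \<rho>))" using \<rho>1 by simp
        also have "\<dots> \<le> (1 - \<rho>) * T" using \<rho>1 S0 by (intro mult_left_mono) (auto simp: T_def)
        finally show ?thesis by (simp add: algebra_simps)
      qed
      show ?case using st Suc b1 b2 by simp
    qed
    have "Cnorm \<theta> dI p \<beta> ((Lft b \<zeta> f0 p h lam Einv f t ^^ n) \<Phi>) \<le> M0 + T"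
      using inv[of n] unfolding Cnorm_def by simp
    also have "\<dots> \<le> C9 * Cnorm \<theta> dI p \<beta> \<Phi>"
    proof -
      have "S0 * (A / (1 - \<rho>)) \<ge> 0" using S0 A0 \<rho>1 by simp
      then show ?thesis unfolding Cnorm_def M0_def[symmetric] S0_def[symmetric] T_def C9_def
        by (simp add: algebra_simps add_divide_distrib)
    qed
    finally show "Cnorm \<theta> dI p \<beta> ((Lft b \<zeta> f0 p h lam Einv f t ^^ n) \<Phi>) \<le> C9 * Cnorm \<theta> dI p \<beta> \<Phi>" .
    show "inC \<theta> dI p \<beta> ((Lft b \<zeta> f0 p h lam Einv f t ^^ n) \<Phi>)" using inv by blast
  qed
qed

end


theorem mainTheorem18:
  fixes dI :: "real \<Rightarrow> real \<Rightarrow> real"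
    and \<theta> \<eta> \<beta> CE lam p :: real
    and \<tau> :: "real \<Rightarrow> real"
    and b :: nat
    and \<zeta> :: "nat \<Rightarrow> real \<Rightarrow> real"
    and f0 h f :: "(int \<Rightarrow> real) \<Rightarrow> real"
    and \<nu>0 :: "(int \<Rightarrow> real) measure"
    and E Einv :: "(int \<Rightarrow> real) \<Rightarrow> (int \<Rightarrow> real)"
  assumes dI_metric: "metric_on_I dI"
    and dI_bounded: "\<exists>B. \<forall>s\<in>Iset. \<forall>t\<in>Iset. dI s t \<le> B"
    and theta: "0 < \<theta>" "\<theta> < 1"
    and eta: "0 < \<eta>" "\<eta> < 1"
    and beta: "0 < \<beta>" "\<beta> \<le> 1"
    and tau_maps: "\<forall>s\<in>Iset. \<tau> s \<in> Iset"
    and fixpt: "p \<in> Iset" "\<tau> p = p"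
    and branches: "\<forall>j<b. \<forall>s\<in>Iset. \<zeta> j s \<in> Iset \<and> \<tau> (\<zeta> j s) = s"
    and full: "\<forall>s\<in>Iset. {u\<in>Iset. \<tau> u = s} = (\<lambda>j. \<zeta> j s) ` {..<b}"
    and distinct_br: "\<forall>s\<in>Iset. inj_on (\<lambda>j. \<zeta> j s) {..<b}"
    and contract: "\<forall>j<b. \<forall>s\<in>Iset. \<forall>t\<in>Iset. dI (\<zeta> j s) (\<zeta> j t) \<le> \<eta> * dI s t"
    and f0C: "inC \<theta> dI p \<beta> f0"
    and nu_prob: "prob_space \<nu>0"
    and nu_space: "space \<nu>0 = Omega"
    and nu_borel: "sets \<nu>0 = sigma_sets Omega (Om_opens \<theta> dI)"
    and lam_def: "lam = (\<integral>x. Pop b \<zeta> f0 p (\<lambda>_. 1::real) x \<partial>\<nu>0)"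
    and nu_eig: "\<forall>\<Phi> :: (int \<Rightarrow> real) \<Rightarrow> real. inC \<theta> dI p \<beta> \<Phi> \<longrightarrow>
                   (\<integral>x. Pop b \<zeta> f0 p \<Phi> x \<partial>\<nu>0) = lam * (\<integral>x. \<Phi> x \<partial>\<nu>0)"
    and hC: "inC \<theta> dI p \<beta> h"
    and h_pos: "\<forall>x\<in>Omega. 0 < h x"
    and h_eig: "\<forall>x\<in>Omega. Pop b \<zeta> f0 p h x = lam * h x"
    and h_norm: "(\<integral>x. h x \<partial>\<nu>0) = 1"
    and h_reg: "\<forall>x\<in>Omega. \<forall>y\<in>Omega. h x \<le>
        exp (hol_semi \<theta> dI p \<beta> f0 * (\<eta> powr \<beta> / (1 - \<eta> powr \<beta>)) * dOm \<theta> dI x y powr \<beta>) * h y"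
    and E_bij: "bij_betw E Omega Omega"
    and Einv1: "\<forall>x\<in>Omega. Einv (E x) = x"
    and Einv2: "\<forall>x\<in>Omega. E (Einv x) = x"
    and CE: "0 < CE" "CE < 1 / \<eta>"
    and E_lip: "\<forall>n::int. \<forall>x\<in>Omega. \<forall>y\<in>Omega.
        dOm \<theta> dI (shiftn n (Einv x)) (shiftn n (Einv y)) \<le> CE * dOm \<theta> dI (shiftn n x) (shiftn n y)"
    and fC: "inC \<theta> dI p \<beta> f"
  shows "\<exists>C9>0. \<exists>\<delta>>0. \<forall>t. \<bar>t\<bar> < \<delta> \<longrightarrow>
           (\<forall>n. \<forall>\<Phi> :: (int \<Rightarrow> real) \<Rightarrow> complex. inC \<theta> dI p \<beta> \<Phi> \<longrightarrow>
              inC \<theta> dI p \<beta> ((Lft b \<zeta> f0 p h lam Einv f t ^^ n) \<Phi>) \<and>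
              Cnorm \<theta> dI p \<beta> ((Lft b \<zeta> f0 p h lam Einv f t ^^ n) \<Phi>) \<le> C9 * Cnorm \<theta> dI p \<beta> \<Phi>)"
  proof -
  obtain Bd where Bd: "\<forall>s\<in>Iset. \<forall>t\<in>Iset. dI s t \<le> Bd" using dI_bounded by blast
  have bpos: "0 < b"
  proof -
    have "p \<in> {u\<in>Iset. \<tau> u = p}" using fixpt by simp
    then have "p \<in> (\<lambda>j. \<zeta> j p) ` {..<b}" using full fixpt by blast
    then show ?thesis by auto
  qed
  have br: "\<forall>j<b. \<forall>s\<in>Iset. \<zeta> j s \<in> Iset" using branches by blast
  interpret CM2 dI \<theta> \<eta> \<beta> p Bd b \<zeta> f0 h lam
    by unfold_locales (use dI_metric Bd theta eta beta fixpt bpos br contract f0C hC h_pos h_eig h_reg in auto)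
  have EOm: "\<forall>x\<in>Omega. Einv x \<in> Omega"
  proof
    fix x assume x: "x \<in> Omega"
    have "E ` Omega = Omega" using E_bij by (simp add: bij_betw_def)
    then obtain y where "y \<in> Omega" "x = E y" using x by blast
    then show "Einv x \<in> Omega" using Einv1 by simp
  qed
  have Elip: "\<forall>x\<in>Omega. \<forall>y\<in>Omega. dOm \<theta> dI (Einv x) (Einv y) \<le> CE * dOm \<theta> dI x y"
  proof (intro ballI)
    fix x y assume "x \<in> Omega" "y \<in> Omega"
    then have "dOm \<theta> dI (shiftn 0 (Einv x)) (shiftn 0 (Einv y)) \<le> CE * dOm \<theta> dI (shiftn 0 x) (shiftn 0 y)"
      using E_lip by blast
    moreover have "\<And>z. shiftn 0 z = z" by (simp add: shiftn_def)
    ultimately show "dOm \<theta> dI (Einv x) (Einv y) \<le> CE * dOm \<theta> dI x y" by simp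
  qed
  have CEe: "CE * \<eta> < 1" using CE eta by (simp add: less_divide_eq)
  obtain C9 where C9: "0 < C9" and H: "\<forall>t. \<bar>t\<bar> < 1 \<longrightarrow>
           (\<forall>n. \<forall>\<Phi> :: (int \<Rightarrow> real) \<Rightarrow> complex. inC \<theta> dI p \<beta> \<Phi> \<longrightarrow>
              inC \<theta> dI p \<beta> ((Lft b \<zeta> f0 p h lam Einv f t ^^ n) \<Phi>) \<and>
              Cnorm \<theta> dI p \<beta> ((Lft b \<zeta> f0 p h lam Einv f t ^^ n) \<Phi>) \<le> C9 * Cnorm \<theta> dI p \<beta> \<Phi>)"
    using iter[OF EOm Elip CE(1) CEe fC] by blast
  show ?thesis using C9 H by (intro exI[of _ C9] conjI exI[of _ 1]) auto
qed

end
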